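(* Consider the eigenvalue problem $-u^{(6)}(x)=\lambda u(x)$ for $x\in[0,1]$, with $u(0)=u'(0)=u''(0)=0$ and $u(1)=u'(1)=u''(1)=0$. Its eigenvalues, listed in increasing order, can be indexed as $\{\lambda_{n,3}\}_{n=2}^\infty$ so that $$\lambda_{n,3}=(n\pi)^6 \quad\text{if } n\ge 2 \text{ is even},\qquad \lambda_{n,3}=(n\pi+\delta_n)^6\quad\text{if } n\ge 3 \text{ is odd},$$ where the $\delta_n$ ($n\ge 3$ odd) are nonzero real numbers satisfying $$\delta_n\sim 8\,(-1)^{\lfloor n/2\rfloor+1}e^{-(\pi\sqrt3/2)n}\quad (n\to\infty),$$ with $\lfloor n/2\rfloor$ the integer part of $n/2$ and $x_n\sim y_n$ meaning $x_n/y_n\to1$. In particular $\lambda_{n,3}^{1/6}=n\pi$ if and only if $n$ is even.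
   Context: The eigenvalues of this boundary value problem form a sequence of positive numbers tending to infinity. *)

theory Defs
  imports "HOL-Analysis.Analysis"
begin

text \<open>Classical eigenvalue of the sixth-order problem
  -u^(6) = lam u on [0,1], u(0)=u'(0)=u''(0)=0, u(1)=u'(1)=u''(1)=0.
  Du k is the k-th derivative of u (one-sided at the endpoints, i.e. taken
  within [0,1]); u must not vanish identically on [0,1].\<close>
definition sixth_order_eigenvalue :: "real \<Rightarrow> bool" where
  "sixth_order_eigenvalue lam \<longleftrightarrow>
     (\<exists>Du :: nat \<Rightarrow> real \<Rightarrow> real.
        (\<forall>k<6. \<forall>x\<in>{0..1}. (Du k has_real_derivative Du (Suc k) x) (at x within {0..1})) \<and>
        (\<forall>x\<in>{0..1}. - Du 6 x = lam * Du 0 x) \<and>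
        (\<forall>k<3. Du k 0 = 0 \<and> Du k 1 = 0) \<and>
        (\<exists>x\<in>{0..1}. Du 0 x \<noteq> 0))"

end

theory Submission
  imports Defs
begin

definition gf :: "real \<Rightarrow> real \<Rightarrow> real" where
"gf j t = (cos (t - j*pi/2) + exp (sqrt 3/2*t) * cos (t/2 - j*pi/6)
           + exp (-(sqrt 3/2*t)) * cos (t/2 - 5*j*pi/6)) / 3"

lemma cos56: "cos (5*pi/6) = - (sqrt 3/2)" and sin56: "sin (5*pi/6) = 1/2"
proof -
  have h: "5*pi/6 = pi - pi/6" by simp
  have "cos (5*pi/6) = cos pi * cos (pi/6) + sin pi * sin (pi/6)" unfolding h by (rule cos_diff)
  then show "cos (5*pi/6) = - (sqrt 3/2)" by (simp add: cos_30)
  have "sin (5*pi/6) = sin pi * cos (pi/6) - cos pi * sin (pi/6)" unfolding h by (rule sin_diff)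
  then show "sin (5*pi/6) = 1/2" by (simp add: sin_30)
qed

lemma gf_deriv: "((gf j) has_real_derivative gf (j-1) t) (at t)"
proof -
  have e1: "cos (t - (j-1)*pi/2) = - sin (t - j*pi/2)"
  proof -
    have "cos (t - (j-1)*pi/2) = cos ((t - j*pi/2) + pi/2)" by (rule arg_cong[where f=cos]) (simp add: field_simps)
    then show ?thesis by (simp add: cos_add)
  qed
  have e2: "cos (t/2 - (j-1)*pi/6) = cos (t/2 - j*pi/6) * (sqrt 3/2) - sin (t/2 - j*pi/6) * (1/2)"
  proof -
    have "cos (t/2 - (j-1)*pi/6) = cos ((t/2 - j*pi/6) + pi/6)" by (rule arg_cong[where f=cos]) (simp add: field_simps)
    then show ?thesis by (simp add: cos_add cos_30 sin_30)
  qed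
  have e3: "cos (t/2 - 5*(j-1)*pi/6) = cos (t/2 - 5*j*pi/6) * (-(sqrt 3/2)) - sin (t/2 - 5*j*pi/6) * (1/2)"
  proof -
    have "cos (t/2 - 5*(j-1)*pi/6) = cos ((t/2 - 5*j*pi/6) + 5*pi/6)" by (rule arg_cong[where f=cos]) (simp add: field_simps)
    then show ?thesis by (simp add: cos_add cos56 sin56)
  qed
  define D where "D = (- sin (t - j*pi/2) + exp (sqrt 3/2*t) * (sqrt 3/2) * cos (t/2 - j*pi/6)
     - exp (sqrt 3/2*t) * sin (t/2 - j*pi/6) / 2
     - exp (-(sqrt 3/2*t)) * (sqrt 3/2) * cos (t/2 - 5*j*pi/6)
     - exp (-(sqrt 3/2*t)) * sin (t/2 - 5*j*pi/6) / 2) / 3"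
  have "((gf j) has_real_derivative D) (at t)" unfolding gf_def D_def
    by (auto intro!: derivative_eq_intros simp: field_simps)
  moreover have "D = gf (j-1) t" unfolding D_def gf_def e1 e2 e3 by (simp add: field_simps)
  ultimately show ?thesis by simp
qed

lemma gf_shift6: "gf (j - 6) t = - gf j t"
proof -
  have a: "cos (t - (j-6)*pi/2) = - cos (t - j*pi/2)"
  proof -
    have "cos (t - (j-6)*pi/2) = cos ((t - j*pi/2) + pi + 2*pi)" by (rule arg_cong[where f=cos]) (simp add: field_simps)
    then show ?thesis by (simp add: cos_add)
  qed
  have b: "cos (t/2 - (j-6)*pi/6) = - cos (t/2 - j*pi/6)"
  proof -
    have "cos (t/2 - (j-6)*pi/6) = cos ((t/2 - j*pi/6) + pi)" by (rule arg_cong[where f=cos]) (simp add: field_simps)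
    then show ?thesis by (simp add: cos_add)
  qed
  have c: "cos (t/2 - 5*(j-6)*pi/6) = - cos (t/2 - 5*j*pi/6)"
  proof -
    have "cos (t/2 - 5*(j-6)*pi/6) = cos ((t/2 - 5*j*pi/6) + pi + 2*2*pi)" by (rule arg_cong[where f=cos]) (simp add: field_simps)
    then show ?thesis by (simp add: cos_add)
  qed
  show ?thesis unfolding gf_def a b c by (simp add: field_simps)
qed

lemma gf_expand: "gf j t = (cos t * cos (j*pi/2) + sin t * sin (j*pi/2)
   + exp (sqrt 3/2*t) * (cos (t/2) * cos (j*pi/6) + sin (t/2) * sin (j*pi/6))
   + exp (-(sqrt 3/2*t)) * (cos (t/2) * cos (5*j*pi/6) + sin (t/2) * sin (5*j*pi/6)))/3"
  unfolding gf_def cos_diff by (rule refl)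

lemma tv_0: "cos (1*pi/2) = 0" "sin (1*pi/2) = 1"
proof -
  have e: "1*pi/2 = pi/2" by (simp add: field_simps)
  show "cos (1*pi/2) = 0" unfolding e cos_add sin_add by (simp add: cos_30 sin_30 cos_60 sin_60)
  show "sin (1*pi/2) = 1" unfolding e cos_add sin_add by (simp add: cos_30 sin_30 cos_60 sin_60)
qed

lemma tv_1: "cos (1*pi/6) = sqrt 3/2" "sin (1*pi/6) = 1/2"
proof -
  have e: "1*pi/6 = pi/6" by (simp add: field_simps)
  show "cos (1*pi/6) = sqrt 3/2" unfolding e cos_add sin_add by (simp add: cos_30 sin_30 cos_60 sin_60)
  show "sin (1*pi/6) = 1/2" unfolding e cos_add sin_add by (simp add: cos_30 sin_30 cos_60 sin_60)
qed

lemma tv_2: "cos (5*1*pi/6) = -(sqrt 3/2)" "sin (5*1*pi/6) = 1/2"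
proof -
  have e: "5*1*pi/6 = pi/2 + pi/3" by (simp add: field_simps)
  show "cos (5*1*pi/6) = -(sqrt 3/2)" unfolding e cos_add sin_add by (simp add: cos_30 sin_30 cos_60 sin_60)
  show "sin (5*1*pi/6) = 1/2" unfolding e cos_add sin_add by (simp add: cos_30 sin_30 cos_60 sin_60)
qed

lemma tv_3: "cos (2*pi/2) = -(1)" "sin (2*pi/2) = 0"
proof -
  have e: "2*pi/2 = pi" by (simp add: field_simps)
  show "cos (2*pi/2) = -(1)" unfolding e cos_add sin_add by (simp add: cos_30 sin_30 cos_60 sin_60)
  show "sin (2*pi/2) = 0" unfolding e cos_add sin_add by (simp add: cos_30 sin_30 cos_60 sin_60)
qed

lemma tv_4: "cos (2*pi/6) = 1/2" "sin (2*pi/6) = sqrt 3/2"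
proof -
  have e: "2*pi/6 = pi/3" by (simp add: field_simps)
  show "cos (2*pi/6) = 1/2" unfolding e cos_add sin_add by (simp add: cos_30 sin_30 cos_60 sin_60)
  show "sin (2*pi/6) = sqrt 3/2" unfolding e cos_add sin_add by (simp add: cos_30 sin_30 cos_60 sin_60)
qed

lemma tv_5: "cos (5*2*pi/6) = 1/2" "sin (5*2*pi/6) = -(sqrt 3/2)"
proof -
  have e: "5*2*pi/6 = pi/2 + pi/6 + pi" by (simp add: field_simps)
  show "cos (5*2*pi/6) = 1/2" unfolding e cos_add sin_add by (simp add: cos_30 sin_30 cos_60 sin_60)
  show "sin (5*2*pi/6) = -(sqrt 3/2)" unfolding e cos_add sin_add by (simp add: cos_30 sin_30 cos_60 sin_60)
qed

lemma tv_6: "cos (3*pi/2) = 0" "sin (3*pi/2) = -(1)"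
proof -
  have e: "3*pi/2 = pi/2 + pi" by (simp add: field_simps)
  show "cos (3*pi/2) = 0" unfolding e cos_add sin_add by (simp add: cos_30 sin_30 cos_60 sin_60)
  show "sin (3*pi/2) = -(1)" unfolding e cos_add sin_add by (simp add: cos_30 sin_30 cos_60 sin_60)
qed

lemma tv_7: "cos (3*pi/6) = 0" "sin (3*pi/6) = 1"
proof -
  have e: "3*pi/6 = pi/2" by (simp add: field_simps)
  show "cos (3*pi/6) = 0" unfolding e cos_add sin_add by (simp add: cos_30 sin_30 cos_60 sin_60)
  show "sin (3*pi/6) = 1" unfolding e cos_add sin_add by (simp add: cos_30 sin_30 cos_60 sin_60)
qed

lemma tv_8: "cos (5*3*pi/6) = 0" "sin (5*3*pi/6) = 1"
proof -
  have e: "5*3*pi/6 = pi/2 + pi + pi" by (simp add: field_simps)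
  show "cos (5*3*pi/6) = 0" unfolding e cos_add sin_add by (simp add: cos_30 sin_30 cos_60 sin_60)
  show "sin (5*3*pi/6) = 1" unfolding e cos_add sin_add by (simp add: cos_30 sin_30 cos_60 sin_60)
qed

lemma tv_9: "cos (4*pi/2) = 1" "sin (4*pi/2) = 0"
proof -
  have e: "4*pi/2 = pi + pi" by (simp add: field_simps)
  show "cos (4*pi/2) = 1" unfolding e cos_add sin_add by (simp add: cos_30 sin_30 cos_60 sin_60)
  show "sin (4*pi/2) = 0" unfolding e cos_add sin_add by (simp add: cos_30 sin_30 cos_60 sin_60)
qed

lemma tv_10: "cos (4*pi/6) = -(1/2)" "sin (4*pi/6) = sqrt 3/2"
proof -
  have e: "4*pi/6 = pi/2 + pi/6" by (simp add: field_simps)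
  show "cos (4*pi/6) = -(1/2)" unfolding e cos_add sin_add by (simp add: cos_30 sin_30 cos_60 sin_60)
  show "sin (4*pi/6) = sqrt 3/2" unfolding e cos_add sin_add by (simp add: cos_30 sin_30 cos_60 sin_60)
qed

lemma tv_11: "cos (5*4*pi/6) = -(1/2)" "sin (5*4*pi/6) = -(sqrt 3/2)"
proof -
  have e: "5*4*pi/6 = pi/3 + pi + pi + pi" by (simp add: field_simps)
  show "cos (5*4*pi/6) = -(1/2)" unfolding e cos_add sin_add by (simp add: cos_30 sin_30 cos_60 sin_60)
  show "sin (5*4*pi/6) = -(sqrt 3/2)" unfolding e cos_add sin_add by (simp add: cos_30 sin_30 cos_60 sin_60)
qed

lemma tv_12: "cos (5*pi/2) = 0" "sin (5*pi/2) = 1"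
proof -
  have e: "5*pi/2 = pi/2 + pi + pi" by (simp add: field_simps)
  show "cos (5*pi/2) = 0" unfolding e cos_add sin_add by (simp add: cos_30 sin_30 cos_60 sin_60)
  show "sin (5*pi/2) = 1" unfolding e cos_add sin_add by (simp add: cos_30 sin_30 cos_60 sin_60)
qed

lemma tv_13: "cos (5*pi/6) = -(sqrt 3/2)" "sin (5*pi/6) = 1/2"
proof -
  have e: "5*pi/6 = pi/2 + pi/3" by (simp add: field_simps)
  show "cos (5*pi/6) = -(sqrt 3/2)" unfolding e cos_add sin_add by (simp add: cos_30 sin_30 cos_60 sin_60)
  show "sin (5*pi/6) = 1/2" unfolding e cos_add sin_add by (simp add: cos_30 sin_30 cos_60 sin_60)
qed

lemma tv_14: "cos (5*5*pi/6) = sqrt 3/2" "sin (5*5*pi/6) = 1/2"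
proof -
  have e: "5*5*pi/6 = pi/6 + pi + pi + pi + pi" by (simp add: field_simps)
  show "cos (5*5*pi/6) = sqrt 3/2" unfolding e cos_add sin_add by (simp add: cos_30 sin_30 cos_60 sin_60)
  show "sin (5*5*pi/6) = 1/2" unfolding e cos_add sin_add by (simp add: cos_30 sin_30 cos_60 sin_60)
qed

lemmas tv_all = tv_0 tv_1 tv_2 tv_3 tv_4 tv_5 tv_6 tv_7 tv_8 tv_9 tv_10 tv_11 tv_12 tv_13 tv_14

lemma cos_half: "cos (t::real) = cos (t/2)^2 - sin (t/2)^2" and sin_half: "sin t = 2 * sin (t/2) * cos (t/2)"
proof -
  have e: "t = 2 * (t/2)" by simp
  show "cos t = cos (t/2)^2 - sin (t/2)^2" by (subst e, rule cos_double)
  show "sin t = 2 * sin (t/2) * cos (t/2)" by (subst e, rule sin_double)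
qed

lemma gf1: "gf 1 t = (2 * sin (t/2) * cos (t/2) + exp (sqrt 3/2*t) * (cos (t/2) * sqrt 3/2 + sin (t/2)/2)
   + exp (-(sqrt 3/2*t)) * (-(cos (t/2) * sqrt 3/2) + sin (t/2)/2))/3"
  by (simp only: gf_expand tv_all sin_half[of t]) (simp add: algebra_simps)
lemma gf2: "gf 2 t = (-(cos (t/2)^2 - sin (t/2)^2) + exp (sqrt 3/2*t) * (cos (t/2)/2 + sin (t/2) * sqrt 3/2)
   + exp (-(sqrt 3/2*t)) * (cos (t/2)/2 - sin (t/2) * sqrt 3/2))/3"
  by (simp only: gf_expand tv_all cos_half[of t]) (simp add: algebra_simps)
lemma gf3: "gf 3 t = (-(2 * sin (t/2) * cos (t/2)) + exp (sqrt 3/2*t) * sin (t/2)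
   + exp (-(sqrt 3/2*t)) * sin (t/2))/3"
  by (simp only: gf_expand tv_all sin_half[of t]) (simp add: algebra_simps)
lemma gf4: "gf 4 t = ((cos (t/2)^2 - sin (t/2)^2) + exp (sqrt 3/2*t) * (-(cos (t/2)/2) + sin (t/2) * sqrt 3/2)
   + exp (-(sqrt 3/2*t)) * (-(cos (t/2)/2) - sin (t/2) * sqrt 3/2))/3"
  by (simp only: gf_expand tv_all cos_half[of t]) (simp add: algebra_simps)
lemma gf5: "gf 5 t = (2 * sin (t/2) * cos (t/2) + exp (sqrt 3/2*t) * (-(cos (t/2) * sqrt 3/2) + sin (t/2)/2)
   + exp (-(sqrt 3/2*t)) * (cos (t/2) * sqrt 3/2 + sin (t/2)/2))/3"
  by (simp only: gf_expand tv_all sin_half[of t]) (simp add: algebra_simps)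

lemma gf0_0: "gf 0 0 = 1" by (simp add: gf_def)
lemma gf_at0: "gf 1 0 = 0" "gf 2 0 = 0" "gf 3 0 = 0" "gf 4 0 = 0" "gf 5 0 = 0"
  by (simp_all add: gf1 gf2 gf3 gf4 gf5)
lemma gf_neg0: "gf (-1) 0 = 0" "gf (-2) 0 = 0" "gf (-3) 0 = 0" "gf (-4) 0 = 0" "gf (-5) 0 = 0"
  "gf (-6) 0 = -1"
proof -
  have "gf (-1) 0 = gf (5-6) 0" "gf (-2) 0 = gf (4-6) 0" "gf (-3) 0 = gf (3-6) 0"
    "gf (-4) 0 = gf (2-6) 0" "gf (-5) 0 = gf (1-6) 0" "gf (-6) 0 = gf (0-6) 0" by simp_all
  then show "gf (-1) 0 = 0" "gf (-2) 0 = 0" "gf (-3) 0 = 0" "gf (-4) 0 = 0" "gf (-5) 0 = 0"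
  "gf (-6) 0 = -1" by (simp_all only: gf_shift6 gf_at0 gf0_0)
qed

lemma detpoly2:
  fixes cc ss pp uu :: real
  assumes h1: "cc^2 + ss^2 = 1" and h2: "uu^2 = 3 * (pp^2 - 1)"
  shows "(2 * ss * (pp - cc)) * ((2 * ss * (pp - cc)) * (2 * ss * (pp - cc))
        - ((cc^2 - ss^2) - pp * cc + ss * uu) * (-(cc^2 - ss^2) + pp * cc + ss * uu))
     - ((cc^2 - ss^2) - pp * cc + ss * uu) * ((-(cc^2 - ss^2) + pp * cc + ss * uu) * (2 * ss * (pp - cc))
        - ((cc^2 - ss^2) - pp * cc + ss * uu) * (2 * ss * cc + pp * ss + cc * uu))
     + (2 * ss * cc + pp * ss - cc * uu) * ((-(cc^2 - ss^2) + pp * cc + ss * uu) * (-(cc^2 - ss^2) + pp * cc + ss * uu)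
        - (2 * ss * (pp - cc)) * (2 * ss * cc + pp * ss + cc * uu))
     = 6 * ss * (pp - cc) * (1 + ss^2 - cc * pp)"
proof -
  have "(2 * ss * (pp - cc)) * ((2 * ss * (pp - cc)) * (2 * ss * (pp - cc))
        - ((cc^2 - ss^2) - pp * cc + ss * uu) * (-(cc^2 - ss^2) + pp * cc + ss * uu))
     - ((cc^2 - ss^2) - pp * cc + ss * uu) * ((-(cc^2 - ss^2) + pp * cc + ss * uu) * (2 * ss * (pp - cc))
        - ((cc^2 - ss^2) - pp * cc + ss * uu) * (2 * ss * cc + pp * ss + cc * uu))
     + (2 * ss * cc + pp * ss - cc * uu) * ((-(cc^2 - ss^2) + pp * cc + ss * uu) * (-(cc^2 - ss^2) + pp * cc + ss * uu)
        - (2 * ss * (pp - cc)) * (2 * ss * cc + pp * ss + cc * uu))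
     - 6 * ss * (pp - cc) * (1 + ss^2 - cc * pp)
     = (cc^2 + ss^2 - 1) * ((-6) * cc * ss * pp^2 + 6 * cc^2 * ss * pp + 6 * ss^3 * pp + (-6) * cc * ss + 6 * ss * pp)
       + (uu^2 - 3 * (pp^2 - 1)) * ((-2) * ss^3 * pp + 4 * cc * ss^3 + 2 * cc^3 * ss + (-2) * cc^2 * ss * pp)"
    by algebra
  then show ?thesis using h1 h2 by simp
qed

lemma ker3_det:
  fixes a11 a12 a13 a21 a22 a23 a31 a32 a33 x y z :: real
  assumes "a11*x + a12*y + a13*z = 0" "a21*x + a22*y + a23*z = 0" "a31*x + a32*y + a33*z = 0"
    and "x \<noteq> 0 \<or> y \<noteq> 0 \<or> z \<noteq> 0"
  shows "a11*(a22*a33 - a23*a32) - a12*(a21*a33 - a23*a31) + a13*(a21*a32 - a22*a31) = 0"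
proof -
  let ?d = "a11*(a22*a33 - a23*a32) - a12*(a21*a33 - a23*a31) + a13*(a21*a32 - a22*a31)"
  have "?d * x = 0" "?d * y = 0" "?d * z = 0" using assms(1-3) by algebra+
  then show ?thesis using assms(4) by auto
qed

lemma det_ker3:
  fixes a11 a12 a13 a21 a22 a23 a31 a32 a33 :: real
  assumes "a11*(a22*a33 - a23*a32) - a12*(a21*a33 - a23*a31) + a13*(a21*a32 - a22*a31) = 0"
  shows "\<exists>x y z. (x \<noteq> 0 \<or> y \<noteq> 0 \<or> z \<noteq> 0) \<and> a11*x + a12*y + a13*z = 0 \<and>
     a21*x + a22*y + a23*z = 0 \<and> a31*x + a32*y + a33*z = 0"
proof -
  define A :: "real^3^3" where "A = vector [vector [a11,a12,a13], vector [a21,a22,a23], vector [a31,a32,a33]]"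
  have "det A = 0" using assms unfolding A_def det_3 by (simp add: algebra_simps)
  then have "rank A < CARD(3)" by (simp add: det_eq_0_rank)
  then have "rank A \<noteq> CARD(3)" by simp
  then obtain v where v: "v \<noteq> 0" "A *v v = 0" using matrix_nonfull_linear_equations_eq by blast
  have eqs: "(A *v v) $ 1 = 0" "(A *v v) $ 2 = 0" "(A *v v) $ 3 = 0" using v(2) by simp_all
  have nz: "v$1 \<noteq> 0 \<or> v$2 \<noteq> 0 \<or> v$3 \<noteq> 0"
  proof (rule ccontr)
    assume "\<not> ?thesis"
    then have "v = 0" by (simp add: vec_eq_iff forall_3)
    with v(1) show False by simp
  qed
  show ?thesis
    apply (rule exI[of _ "v$1"], rule exI[of _ "v$2"], rule exI[of _ "v$3"])
    using eqs nz unfolding A_def by (simp add: matrix_vector_mult_def sum_3)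
qed

lemma deriv_zero_within:
  fixes f g :: "real \<Rightarrow> real"
  assumes "\<forall>x\<in>{0..1}. f x = 0" "\<forall>x\<in>{0..1}. (f has_real_derivative g x) (at x within {0..1})"
    and x: "x \<in> {0..1}"
  shows "g x = 0"
proof -
  have d1: "(f has_real_derivative g x) (at x within {0..1})" using assms by auto
  have d0: "(f has_real_derivative 0) (at x within {0..1})"
  proof (rule has_field_derivative_transform_within[of "\<lambda>_. 0" 0 x "{0..1}" 1])
    show "((\<lambda>_. 0) has_real_derivative 0) (at x within {0..1})" by simp
  qed (use assms in auto)
  have nb: "at x within {0..1::real} \<noteq> bot"
    using x by (auto simp: trivial_limit_within islimpt_Icc)
  show ?thesis
    using vector_derivative_unique_within[OF nb, of f "g x" 0] d1 d0
    by (simp add: has_real_derivative_iff_has_vector_derivative)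
qed

lemma mono_within:
  fixes f f' :: "real \<Rightarrow> real"
  assumes "\<forall>x\<in>{a..b}. (f has_real_derivative f' x) (at x within {a..b})"
    and "\<forall>x\<in>{a..b}. f' x \<le> 0" and "a \<le> b"
  shows "f b \<le> f a"
proof (rule DERIV_nonpos_imp_decreasing_open[OF \<open>a \<le> b\<close>])
  fix x assume "a < x" "x < b"
  then have "(f has_real_derivative f' x) (at x)"
  proof -
    have "(f has_real_derivative f' x) (at x within {a..b})" using assms(1) \<open>a<x\<close> \<open>x<b\<close> by auto
    moreover have "at x within {a..b} = at x" using at_within_Icc_at \<open>a<x\<close> \<open>x<b\<close> by blast
    ultimately show ?thesis by simp
  qed
  then show "\<exists>y. (f has_real_derivative y) (at x) \<and> y \<le> 0" using assms(2) \<open>a<x\<close> \<open>x<b\<close> by auto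
next
  show "continuous_on {a..b} f"
    using assms(1) by (meson DERIV_continuous continuous_on_eq_continuous_within)
qed

lemma within_sub:
  assumes "\<forall>x\<in>{0..1}. (f has_real_derivative f' x) (at x within {0..1})" "0 \<le> a" "b \<le> (1::real)"
  shows "\<forall>x\<in>{a..b}. (f has_real_derivative f' x) (at x within {a..b})"
proof
  fix x assume x: "x \<in> {a..b}"
  then have "x \<in> {0..1}" using assms by auto
  then have "(f has_real_derivative f' x) (at x within {0..1})" using assms by auto
  moreover have "{a..b} \<subseteq> {0..1::real}" using assms by auto
  ultimately show "(f has_real_derivative f' x) (at x within {a..b})"
    by (rule has_field_derivative_subset)
qed

lemma zero_from_deriv:
  fixes f f' :: "real \<Rightarrow> real"
  assumes d: "\<forall>x\<in>{0..1}. (f has_real_derivative f' x) (at x within {0..1})"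
    and z: "\<forall>x\<in>{0..1}. f' x = 0" and f0: "f 0 = 0" and x: "x \<in> {0..1}"
  shows "f x = 0"
proof -
  have d': "\<forall>y\<in>{0..x}. (f has_real_derivative f' y) (at y within {0..x})"
    using within_sub[OF d, of 0 x] x by auto
  have A: "f x \<le> f 0" using mono_within[OF d'] z x by auto
  have d'': "\<forall>y\<in>{0..x}. ((\<lambda>y. - f y) has_real_derivative - f' y) (at y within {0..x})"
    using d' by (auto intro: DERIV_minus)
  have B: "(\<lambda>y. - f y) x \<le> (\<lambda>y. - f y) 0" using mono_within[OF d''] z x by auto
  show ?thesis using A B f0 by simp
qed

lemma uniq6:
  fixes W :: "nat \<Rightarrow> real \<Rightarrow> real" and lam :: real
  assumes d: "\<forall>i<6. \<forall>x\<in>{0..1}. (W i has_real_derivative W (Suc i) x) (at x within {0..1})"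
    and e: "\<forall>x\<in>{0..1}. W 6 x = - lam * W 0 x"
    and z: "\<forall>i<6. W i 0 = 0"
  shows "\<forall>i<6. \<forall>x\<in>{0..1}. W i x = 0"
proof -
  define C where "C = 3 + lam^2"
  define E where "E x = W 0 x * W 0 x + W 1 x * W 1 x + W 2 x * W 2 x + W 3 x * W 3 x
      + W 4 x * W 4 x + W 5 x * W 5 x" for x
  define g where "g x = exp (-(C*x)) * E x" for x
  define g' where "g' x = exp (-(C*x)) * (2*(W 0 x * W 1 x + W 1 x * W 2 x + W 2 x * W 3 x
      + W 3 x * W 4 x + W 4 x * W 5 x + W 5 x * W 6 x) - C * E x)" for x
  have dg: "\<forall>x\<in>{0..1}. (g has_real_derivative g' x) (at x within {0..1})"
  proof
    fix x :: real assume x: "x \<in> {0..1}"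
    have h: "(W i has_real_derivative W (Suc i) x) (at x within {0..1})" if "i < 6" for i
      using d x that by auto
    note h0 = h[of 0, simplified] and h1 = h[of 1, simplified] and h2 = h[of 2, simplified]
      and h3 = h[of 3, simplified] and h4 = h[of 4, simplified] and h5 = h[of 5, simplified]
    have s: "Suc 0 = 1" "Suc 1 = 2" "Suc 2 = 3" "Suc 3 = 4" "Suc 4 = 5" "Suc 5 = 6" by simp_all
    show "(g has_real_derivative g' x) (at x within {0..1})"
      unfolding g_def E_def
      apply (rule derivative_eq_intros h0[unfolded s] h1[unfolded s] h2[unfolded s] h3[unfolded s]
                  h4[unfolded s] h5[unfolded s] refl)+
      apply (simp add: g'_def E_def algebra_simps)
      done
  qed
  have gle: "g' x \<le> 0" if x: "x \<in> {0..1}" for x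
  proof -
    define a where "a = W 0 x" define b where "b = W 1 x" define c where "c = W 2 x"
    define dd where "dd = W 3 x" define ee where "ee = W 4 x" define f where "f = W 5 x"
    have w6: "W 6 x = - lam * a" using e x a_def by auto
    have "C * E x - 2*(W 0 x * W 1 x + W 1 x * W 2 x + W 2 x * W 3 x
      + W 3 x * W 4 x + W 4 x * W 5 x + W 5 x * W 6 x)
      = (a-b)^2 + (b-c)^2 + (c-dd)^2 + (dd-ee)^2 + (ee-f)^2 + (f + lam*a)^2
        + 2*a^2 + b^2 + c^2 + dd^2 + ee^2 + f^2 + lam^2 * (b^2 + c^2 + dd^2 + ee^2 + f^2)"
      unfolding w6 C_def E_def a_def[symmetric] b_def[symmetric] c_def[symmetric]
        dd_def[symmetric] ee_def[symmetric] f_def[symmetric]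
      by (simp add: power2_eq_square algebra_simps)
    also have "\<dots> \<ge> 0" by simp
    finally show ?thesis unfolding g'_def
      by (simp add: mult_nonneg_nonpos)
  qed
  have g0: "g 0 = 0" using z unfolding g_def E_def by simp
  have gx: "g x = 0" if x: "x \<in> {0..1}" for x
  proof -
    have "g x \<le> g 0"
      using mono_within[OF within_sub[OF dg, of 0 x]] gle x by auto
    moreover have "g x \<ge> 0" unfolding g_def E_def by simp
    ultimately show ?thesis using g0 by simp
  qed
  show ?thesis
  proof (intro allI impI ballI)
    fix i :: nat and x assume i: "i < 6" and x: "(x::real) \<in> {0..1}"
    have "E x = 0" using gx[OF x] unfolding g_def by simp
    then have all: "W 0 x = 0 \<and> W 1 x = 0 \<and> W 2 x = 0 \<and> W 3 x = 0 \<and> W 4 x = 0 \<and> W 5 x = 0"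
    proof -
      have nn: "0 \<le> W k x * W k x" for k by simp
      have "W 0 x * W 0 x = 0 \<and> W 1 x * W 1 x = 0 \<and> W 2 x * W 2 x = 0 \<and> W 3 x * W 3 x = 0
         \<and> W 4 x * W 4 x = 0 \<and> W 5 x * W 5 x = 0"
        using nn[of 0] nn[of 1] nn[of 2] nn[of 3] nn[of 4] nn[of 5] \<open>E x = 0\<close> unfolding E_def
        by linarith
      then show ?thesis by simp
    qed
    have "i = 0 \<or> i = 1 \<or> i = 2 \<or> i = 3 \<or> i = 4 \<or> i = 5" using i by auto
    then show "W i x = 0" using all by auto
  qed
qed

definition detG :: "real \<Rightarrow> real" where
"detG k = gf 3 k * (gf 3 k * gf 3 k - gf 4 k * gf 2 k) - gf 4 k * (gf 2 k * gf 3 k - gf 4 k * gf 1 k)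
   + gf 5 k * (gf 2 k * gf 2 k - gf 3 k * gf 1 k)"

lemma det_scale:
  fixes g1 g2 g3 g4 g5 h1 h2 h3 h4 h5 :: real
  assumes "3 * g1 = h1" "3 * g2 = h2" "3 * g3 = h3" "3 * g4 = h4" "3 * g5 = h5"
  shows "g3 * (g3 * g3 - g4 * g2) - g4 * (g2 * g3 - g4 * g1) + g5 * (g2 * g2 - g3 * g1)
    = (h3 * (h3 * h3 - h4 * h2) - h4 * (h2 * h3 - h4 * h1) + h5 * (h2 * h2 - h3 * h1)) / 27"
proof -
  show ?thesis unfolding assms[symmetric] by (simp add: algebra_simps)
qed

lemma detG_formula: "detG k = 2/9 * sin (k/2) * ((exp (sqrt 3/2*k) + exp (-(sqrt 3/2*k)))/2 - cos (k/2))
   * (1 + sin (k/2)^2 - cos (k/2) * ((exp (sqrt 3/2*k) + exp (-(sqrt 3/2*k)))/2))"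
proof -
  define cc where "cc = cos (k/2)"
  define ss where "ss = sin (k/2)"
  define pp where "pp = (exp (sqrt 3/2*k) + exp (-(sqrt 3/2*k)))/2"
  define uu where "uu = sqrt 3 * ((exp (sqrt 3/2*k) - exp (-(sqrt 3/2*k)))/2)"
  have h1: "cc^2 + ss^2 = 1" unfolding cc_def ss_def by simp
  have h2: "uu^2 = 3 * (pp^2 - 1)"
  proof -
    have xy: "exp (sqrt 3/2*k) * exp (-(sqrt 3/2*k)) = 1" by (simp add: exp_minus_inverse)
    have s3: "sqrt 3 ^ 2 = (3::real)" by simp
    have gen: "(r * ((x - y)/2))^2 = 3 * (((x + y)/2)^2 - 1)" if "x * y = 1" "r^2 = 3" for x y r :: real
    proof -
      have "(r * ((x - y)/2))^2 = r^2 * (x - y)^2 / 4" by (simp add: power_mult_distrib power_divide)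
      also have "\<dots> = 3 * ((x + y)^2 - 4 * (x * y)) / 4" using that by (simp add: power2_eq_square algebra_simps)
      also have "\<dots> = 3 * (((x + y)/2)^2 - 1)" using that by (simp add: power_divide field_simps)
      finally show ?thesis .
    qed
    show ?thesis unfolding uu_def pp_def by (rule gen[OF xy s3])
  qed
  have "3 * gf 1 k = 2 * ss * cc + pp * ss + cc * uu"
    "3 * gf 2 k = -(cc^2 - ss^2) + pp * cc + ss * uu"
    "3 * gf 3 k = 2 * ss * (pp - cc)"
    "3 * gf 4 k = (cc^2 - ss^2) - pp * cc + ss * uu"
    "3 * gf 5 k = 2 * ss * cc + pp * ss - cc * uu"
    unfolding gf1 gf2 gf3 gf4 gf5 cc_def ss_def pp_def uu_def by (simp_all add: field_simps)
  note ds = det_scale[OF this]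
  show ?thesis unfolding detG_def ds detpoly2[OF h1 h2]
    unfolding cc_def[symmetric] ss_def[symmetric] pp_def[symmetric] by simp
qed

definition Vf :: "real \<Rightarrow> real \<Rightarrow> real \<Rightarrow> real \<Rightarrow> nat \<Rightarrow> real \<Rightarrow> real" where
"Vf c3 c4 c5 k i x = k^i * (c3 * gf (3 - real i) (k*x) + c4 * gf (4 - real i) (k*x) + c5 * gf (5 - real i) (k*x))"

lemma gf_chain: "((\<lambda>x. gf j (k*x)) has_real_derivative gf (j-1) (k*x) * k) (at x within S)"
  by (rule DERIV_chain2[OF gf_deriv]) (auto intro!: derivative_eq_intros)

lemma Vf_deriv: "((Vf c3 c4 c5 k i) has_real_derivative Vf c3 c4 c5 k (Suc i) x) (at x within S)"
proof -
  have e: "a - real i - 1 = a - real (Suc i)" for a by simp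
  show ?thesis unfolding Vf_def
    apply (rule derivative_eq_intros gf_chain refl)+
    apply (simp add: e algebra_simps)
    done
qed

lemma Vf_6: "Vf c3 c4 c5 k 6 x = - (k^6) * Vf c3 c4 c5 k 0 x"
proof -
  have "gf (3 - real 6) y = - gf 3 y" "gf (4 - real 6) y = - gf 4 y" "gf (5 - real 6) y = - gf 5 y" for y
    using gf_shift6[of 3 y] gf_shift6[of 4 y] gf_shift6[of 5 y] by simp_all
  then show ?thesis unfolding Vf_def by (simp add: algebra_simps)
qed

lemma Vf_0: "Vf c3 c4 c5 k 0 0 = 0" "Vf c3 c4 c5 k 1 0 = 0" "Vf c3 c4 c5 k 2 0 = 0"
  "Vf c3 c4 c5 k 3 0 = k^3 * c3" "Vf c3 c4 c5 k 4 0 = k^4 * c4" "Vf c3 c4 c5 k 5 0 = k^5 * c5"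
  unfolding Vf_def by (simp_all add: gf_at0 gf_neg0 gf0_0)

lemma Vf_1: "Vf c3 c4 c5 k 0 1 = c3 * gf 3 k + c4 * gf 4 k + c5 * gf 5 k"
  "Vf c3 c4 c5 k 1 1 = k * (c3 * gf 2 k + c4 * gf 3 k + c5 * gf 4 k)"
  "Vf c3 c4 c5 k 2 1 = k^2 * (c3 * gf 1 k + c4 * gf 2 k + c5 * gf 3 k)"
  unfolding Vf_def by simp_all

lemma eigen_if:
  assumes k: "k > 0" and c: "c3 \<noteq> 0 \<or> c4 \<noteq> 0 \<or> c5 \<noteq> 0"
    and e1: "c3 * gf 3 k + c4 * gf 4 k + c5 * gf 5 k = 0"
    and e2: "c3 * gf 2 k + c4 * gf 3 k + c5 * gf 4 k = 0"
    and e3: "c3 * gf 1 k + c4 * gf 2 k + c5 * gf 3 k = 0"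
  shows "sixth_order_eigenvalue (k^6)"
  unfolding sixth_order_eigenvalue_def
proof (intro exI conjI)
  let ?D = "Vf c3 c4 c5 k"
  show d: "\<forall>i<6. \<forall>x\<in>{0..1}. (?D i has_real_derivative ?D (Suc i) x) (at x within {0..1})"
    using Vf_deriv by blast
  show "\<forall>x\<in>{0..1}. - ?D 6 x = k^6 * ?D 0 x" using Vf_6 by simp
  show "\<forall>i<3. ?D i 0 = 0 \<and> ?D i 1 = 0"
  proof (intro allI impI)
    fix i :: nat assume "i < 3"
    then have "i = 0 \<or> i = 1 \<or> i = 2" by auto
    then show "?D i 0 = 0 \<and> ?D i 1 = 0" using Vf_0 Vf_1 e1 e2 e3 by auto
  qed
  show "\<exists>x\<in>{0..1}. ?D 0 x \<noteq> 0"
  proof (rule ccontr)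
    assume "\<not> ?thesis"
    then have z0: "\<forall>x\<in>{0..1}. ?D 0 x = 0" by auto
    have zs: "\<forall>x\<in>{0..1}. ?D (Suc i) x = 0" if "\<forall>x\<in>{0..1}. ?D i x = 0" for i
      using deriv_zero_within[OF that] Vf_deriv by blast
    have "\<forall>x\<in>{0..1}. ?D i x = 0" for i
      by (induction i) (use z0 zs in auto)
    then have "?D 3 0 = 0" "?D 4 0 = 0" "?D 5 0 = 0" by auto
    then show False using Vf_0 k c by simp
  qed
qed

lemma eigen_pos:
  assumes "sixth_order_eigenvalue lam"
  shows "lam > 0"
proof (rule ccontr)
  assume "\<not> lam > 0"
  then have lam: "lam \<le> 0" by simp
  obtain Du :: "nat \<Rightarrow> real \<Rightarrow> real" where
    d: "\<forall>k<6. \<forall>x\<in>{0..1}. (Du k has_real_derivative Du (Suc k) x) (at x within {0..1})"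
    and e: "\<forall>x\<in>{0..1}. - Du 6 x = lam * Du 0 x"
    and bc: "\<forall>k<3. Du k 0 = 0 \<and> Du k 1 = 0"
    and nz: "\<exists>x\<in>{0..1}. Du 0 x \<noteq> 0"
    using assms unfolding sixth_order_eigenvalue_def by blast
  have h: "(Du i has_real_derivative Du (Suc i) x) (at x within {0..1})" if "i < 6" "x \<in> {0..1}" for i x
    using d that by auto
  define G where "G x = Du 5 x * Du 0 x - Du 4 x * Du 1 x + Du 3 x * Du 2 x" for x
  define G' where "G' x = Du 3 x * Du 3 x - lam * (Du 0 x * Du 0 x)" for x
  have dG: "\<forall>x\<in>{0..1}. (G has_real_derivative G' x) (at x within {0..1})"
  proof
    fix x :: real assume x: "x \<in> {0..1}"
    have s: "Suc 0 = 1" "Suc 1 = 2" "Suc 2 = 3" "Suc 3 = 4" "Suc 4 = 5" "Suc 5 = 6" by simp_all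
    have hx: "(Du i has_real_derivative Du (Suc i) x) (at x within {0..1})" if "i < 6" for i
      using h x that by auto
    note h0 = hx[of 0, simplified] and h1 = hx[of 1, simplified, unfolded s]
      and h2 = hx[of 2, simplified, unfolded s]
      and h3 = hx[of 3, simplified, unfolded s] and h4 = hx[of 4, simplified, unfolded s]
      and h5 = hx[of 5, simplified, unfolded s]
    have "- Du 6 x = lam * Du 0 x" using e x by auto
    then have e6: "Du 6 x = - lam * Du 0 x" by linarith
    show "(G has_real_derivative G' x) (at x within {0..1})"
      unfolding G_def
      apply (rule derivative_eq_intros h0 h1 h2 h3 h4 h5 refl)+
      apply (simp add: G'_def e6 algebra_simps)
      done
  qed
  have G'nn: "G' x \<ge> 0" for x
  proof -
    have "lam * (Du 0 x * Du 0 x) \<le> 0" using lam by (simp add: mult_nonpos_nonneg)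
    moreover have "0 \<le> Du 3 x * Du 3 x" by simp
    ultimately show ?thesis unfolding G'_def by linarith
  qed
  have G0: "G 0 = 0" and G1: "G 1 = 0" using bc unfolding G_def by auto
  have Gz: "\<forall>x\<in>{0..1}. G x = 0"
  proof
    fix x :: real assume x: "x \<in> {0..1}"
    have dm: "\<forall>x\<in>{0..1}. ((\<lambda>y. - G y) has_real_derivative - G' x) (at x within {0..1})"
      using dG by (auto intro: DERIV_minus)
    have "(\<lambda>y. - G y) x \<le> (\<lambda>y. - G y) 0"
      using mono_within[OF within_sub[OF dm, of 0 x]] G'nn x by auto
    moreover have "(\<lambda>y. - G y) 1 \<le> (\<lambda>y. - G y) x"
      using mono_within[OF within_sub[OF dm, of x 1]] G'nn x by auto
    ultimately show "G x = 0" using G0 G1 by simp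
  qed
  have G'z: "G' x = 0" if "x \<in> {0..1}" for x
    using deriv_zero_within[OF Gz dG that] .
  have D3: "\<forall>x\<in>{0..1}. Du 3 x = 0"
  proof
    fix x :: real assume x: "x \<in> {0..1}"
    have "Du 3 x * Du 3 x = lam * (Du 0 x * Du 0 x)" using G'z[OF x] unfolding G'_def by simp
    moreover have "lam * (Du 0 x * Du 0 x) \<le> 0" using lam by (simp add: mult_nonpos_nonneg)
    ultimately show "Du 3 x = 0" by (metis mult_eq_0_iff not_square_less_zero order_le_less)
  qed
  have d2: "\<forall>x\<in>{0..1}. (Du 2 has_real_derivative Du 3 x) (at x within {0..1})"
    using d by (simp add: numeral_eq_Suc)
  have d1: "\<forall>x\<in>{0..1}. (Du 1 has_real_derivative Du 2 x) (at x within {0..1})"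
    using d by (simp add: numeral_eq_Suc)
  have d0: "\<forall>x\<in>{0..1}. (Du 0 has_real_derivative Du 1 x) (at x within {0..1})"
    using d by (simp add: numeral_eq_Suc)
  have D2: "\<forall>x\<in>{0..1}. Du 2 x = 0" using zero_from_deriv[OF d2] D3 bc by auto
  have D1: "\<forall>x\<in>{0..1}. Du 1 x = 0" using zero_from_deriv[OF d1] D2 bc by auto
  have D0: "\<forall>x\<in>{0..1}. Du 0 x = 0" using zero_from_deriv[OF d0] D1 bc by auto
  then show False using nz by auto
qed

lemma eigen_det:
  assumes ev: "sixth_order_eigenvalue lam"
  shows "detG (root 6 lam) = 0"
proof -
  have lam: "lam > 0" using eigen_pos[OF ev] .
  define k where "k = root 6 lam"
  have k: "k > 0" "k^6 = lam" using lam unfolding k_def by simp_all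
  obtain Du :: "nat \<Rightarrow> real \<Rightarrow> real" where
    d: "\<forall>k<6. \<forall>x\<in>{0..1}. (Du k has_real_derivative Du (Suc k) x) (at x within {0..1})"
    and e: "\<forall>x\<in>{0..1}. - Du 6 x = lam * Du 0 x"
    and bc: "\<forall>k<3. Du k 0 = 0 \<and> Du k 1 = 0"
    and nz: "\<exists>x\<in>{0..1}. Du 0 x \<noteq> 0"
    using ev unfolding sixth_order_eigenvalue_def by blast
  define c3 where "c3 = Du 3 0 / k^3"
  define c4 where "c4 = Du 4 0 / k^4"
  define c5 where "c5 = Du 5 0 / k^5"
  define W where "W i x = Du i x - Vf c3 c4 c5 k i x" for i x
  have dW: "\<forall>i<6. \<forall>x\<in>{0..1}. (W i has_real_derivative W (Suc i) x) (at x within {0..1})"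
  proof (intro allI impI ballI)
    fix i :: nat and x :: real assume "i < 6" "x \<in> {0..1}"
    then have "(Du i has_real_derivative Du (Suc i) x) (at x within {0..1})" using d by auto
    then show "(W i has_real_derivative W (Suc i) x) (at x within {0..1})"
      unfolding W_def by (intro DERIV_diff Vf_deriv)
  qed
  have eW: "\<forall>x\<in>{0..1}. W 6 x = - lam * W 0 x"
  proof
    fix x :: real assume "x \<in> {0..1}"
    then have "- Du 6 x = lam * Du 0 x" using e by auto
    then show "W 6 x = - lam * W 0 x" unfolding W_def Vf_6 k(2) by (simp add: algebra_simps)
  qed
  have zW: "\<forall>i<6. W i 0 = 0"
  proof (intro allI impI)
    fix i :: nat assume "i < 6"
    then have "i = 0 \<or> i = 1 \<or> i = 2 \<or> i = 3 \<or> i = 4 \<or> i = 5" by auto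
    then show "W i 0 = 0" unfolding W_def using bc k(1) Vf_0
      by (auto simp: c3_def c4_def c5_def)
  qed
  have eq: "\<forall>i<6. \<forall>x\<in>{0..1}. Du i x = Vf c3 c4 c5 k i x"
    using uniq6[OF dW eW zW] unfolding W_def by auto
  have e1: "c3 * gf 3 k + c4 * gf 4 k + c5 * gf 5 k = 0"
    using eq bc Vf_1(1)[of c3 c4 c5 k] by auto
  have "k * (c3 * gf 2 k + c4 * gf 3 k + c5 * gf 4 k) = 0"
    using eq bc Vf_1(2)[of c3 c4 c5 k] by auto
  then have e2: "c3 * gf 2 k + c4 * gf 3 k + c5 * gf 4 k = 0" using k(1) by simp
  have "k^2 * (c3 * gf 1 k + c4 * gf 2 k + c5 * gf 3 k) = 0"
    using eq bc Vf_1(3)[of c3 c4 c5 k] by auto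
  then have e3: "c3 * gf 1 k + c4 * gf 2 k + c5 * gf 3 k = 0" using k(1) by simp
  have cnz: "c3 \<noteq> 0 \<or> c4 \<noteq> 0 \<or> c5 \<noteq> 0"
  proof (rule ccontr)
    assume "\<not> ?thesis"
    then have "\<forall>x\<in>{0..1}. Du 0 x = 0" using eq unfolding Vf_def by auto
    then show False using nz by auto
  qed
  have "detG k = 0" unfolding detG_def
  proof (rule ker3_det[OF _ _ _ cnz])
    show "gf 3 k * c3 + gf 4 k * c4 + gf 5 k * c5 = 0" using e1 by (simp only: mult.commute)
    show "gf 2 k * c3 + gf 3 k * c4 + gf 4 k * c5 = 0" using e2 by (simp only: mult.commute)
    show "gf 1 k * c3 + gf 2 k * c4 + gf 3 k * c5 = 0" using e3 by (simp only: mult.commute)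
  qed
  then show ?thesis unfolding k_def .
qed

lemma eig_iff: "sixth_order_eigenvalue lam \<longleftrightarrow> lam > 0 \<and> detG (root 6 lam) = 0"
proof
  assume "sixth_order_eigenvalue lam"
  then show "lam > 0 \<and> detG (root 6 lam) = 0" using eigen_pos eigen_det by blast
next
  assume h: "lam > 0 \<and> detG (root 6 lam) = 0"
  define k where "k = root 6 lam"
  have k: "k > 0" "k^6 = lam" using h unfolding k_def by simp_all
  have "detG k = 0" using h k_def by simp
  then have "gf 3 k * (gf 3 k * gf 3 k - gf 4 k * gf 2 k) - gf 4 k * (gf 2 k * gf 3 k - gf 4 k * gf 1 k)
   + gf 5 k * (gf 2 k * gf 2 k - gf 3 k * gf 1 k) = 0" unfolding detG_def .
  from det_ker3[OF this] obtain x y z where xyz: "x \<noteq> 0 \<or> y \<noteq> 0 \<or> z \<noteq> 0"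
    "gf 3 k * x + gf 4 k * y + gf 5 k * z = 0"
    "gf 2 k * x + gf 3 k * y + gf 4 k * z = 0"
    "gf 1 k * x + gf 2 k * y + gf 3 k * z = 0"
    by blast
  have "sixth_order_eigenvalue (k^6)"
  proof (rule eigen_if[OF k(1) xyz(1)])
    show "x * gf 3 k + y * gf 4 k + z * gf 5 k = 0" using xyz(2) by (simp only: mult.commute)
    show "x * gf 2 k + y * gf 3 k + z * gf 4 k = 0" using xyz(3) by (simp only: mult.commute)
    show "x * gf 1 k + y * gf 2 k + z * gf 3 k = 0" using xyz(4) by (simp only: mult.commute)
  qed
  then show "sixth_order_eigenvalue lam" using k by simp
qed

lemma gf_negs: "gf (-7) 0 = 0" "gf (-8) 0 = 0" "gf (-9) 0 = 0" "gf (-10) 0 = 0" "gf (-11) 0 = 0"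
  "gf (-12) t = gf 0 t"
proof -
  have "gf (-7) 0 = gf (-1 - 6) 0" "gf (-8) 0 = gf (-2 - 6) 0" "gf (-9) 0 = gf (-3 - 6) 0"
    "gf (-10) 0 = gf (-4 - 6) 0" "gf (-11) 0 = gf (-5 - 6) 0" "gf (-12) t = gf (0 - 6 - 6) t" by simp_all
  then show "gf (-7) 0 = 0" "gf (-8) 0 = 0" "gf (-9) 0 = 0" "gf (-10) 0 = 0" "gf (-11) 0 = 0"
    "gf (-12) t = gf 0 t" by (simp_all only: gf_shift6 gf_neg0)
qed

lemma sqrt3_bounds: "17/10 < sqrt (3::real)" "sqrt (3::real) < 7/4"
proof -
  have "sqrt ((17/10)^2) < sqrt (3::real)" by (rule real_sqrt_less_mono) (simp add: power2_eq_square)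
  then show "17/10 < sqrt (3::real)" by simp
  have "sqrt (3::real) < sqrt ((7/4)^2)" by (rule real_sqrt_less_mono) (simp add: power2_eq_square)
  then show "sqrt (3::real) < 7/4" by simp
qed

lemma gf0_le10: "0 \<le> x \<Longrightarrow> x \<le> pi \<Longrightarrow> gf 0 x \<le> 10"
proof -
  assume x: "0 \<le> x" "x \<le> pi"
  have "sqrt 3 / 2 * x \<le> 7/8 * pi" using x sqrt3_bounds by (intro mult_mono) auto
  also have "\<dots> \<le> 3" using pi_approx by simp
  finally have a: "sqrt 3 / 2 * x \<le> 3" .
  have "exp (sqrt 3 / 2 * x) \<le> exp 3" using a by simp
  also have "exp (3::real) = exp 1 ^ 3" using exp_of_nat_mult[of 3 1] by simp
  also have "\<dots> \<le> 3 ^ 3" using exp_le by (intro power_mono) auto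
  finally have e1: "exp (sqrt 3 / 2 * x) \<le> 27" by simp
  have e2: "exp (-(sqrt 3 / 2 * x)) \<le> 1" using x by simp
  have f1: "exp (sqrt 3 / 2 * x) * cos (x/2) \<le> 27"
    using e1 mult_left_le[of "cos (x/2)" "exp (sqrt 3 / 2 * x)"] by (meson cos_le_one exp_ge_zero order_trans)
  have f2: "exp (-(sqrt 3 / 2 * x)) * cos (x/2) \<le> 1"
    using e2 mult_left_le[of "cos (x/2)" "exp (-(sqrt 3 / 2 * x))"] by (meson cos_le_one exp_ge_zero order_trans)
  have f3: "cos x \<le> 1" by simp
  have g: "gf 0 x = (cos x + exp (sqrt 3 / 2 * x) * cos (x/2) + exp (-(sqrt 3 / 2 * x)) * cos (x/2))/3"
    unfolding gf_def by simp
  have "cos x + exp (sqrt 3 / 2 * x) * cos (x/2) + exp (-(sqrt 3 / 2 * x)) * cos (x/2) \<le> 1 + 27 + 1"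
    by (rule add_mono[OF add_mono[OF f3 f1] f2])
  moreover have "\<And>S::real. S \<le> 1 + 27 + 1 \<Longrightarrow> S / 3 \<le> 10" by simp
  ultimately show "gf 0 x \<le> 10" unfolding g by blast
qed

lemma gf0_lt1:
  assumes t: "0 < t" "t \<le> pi"
  shows "gf 0 t < 1"
proof -
  have dd: "\<forall>m x. m < 12 \<and> 0 \<le> x \<and> x \<le> t \<longrightarrow>
      DERIV ((\<lambda>m. gf (- real m)) m) x :> (\<lambda>m. gf (- real m)) (Suc m) x"
  proof (intro allI impI)
    fix m :: nat and x :: real
    have e: "- real m - 1 = - real (Suc m)" by simp
    show "DERIV ((\<lambda>m. gf (- real m)) m) x :> (\<lambda>m. gf (- real m)) (Suc m) x"
      using gf_deriv[of "- real m" x, unfolded e] by simp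
  qed
  have d0: "(\<lambda>m. gf (- real m)) 0 = gf 0" by simp
  obtain \<xi> where xi: "0 < \<xi>" "\<xi> < t" and
    eq: "gf 0 t = (\<Sum>m<12. (\<lambda>m. gf (- real m)) m 0 / fact m * t ^ m)
                + (\<lambda>m. gf (- real m)) 12 \<xi> / fact 12 * t ^ 12"
    using Maclaurin[OF t(1) _ d0 dd] by auto
  have s: "(\<Sum>m<12. (\<lambda>m. gf (- real m)) m 0 / fact m * t ^ m) = 1 - t^6 / 720"
    by (simp add: lessThan_nat_numeral fact_numeral gf_neg0 gf_negs gf0_0)
  have r: "(\<lambda>m. gf (- real m)) 12 \<xi> = gf 0 \<xi>" using gf_negs(6)[of \<xi>] by simp
  have b: "gf 0 \<xi> \<le> 10" using gf0_le10[of \<xi>] xi t by simp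
  have t6: "t^6 < 4096"
  proof -
    have "t^6 \<le> pi^6" using t by (intro power_mono) auto
    also have "\<dots> < 4^6" using pi_less_4 by (intro power_strict_mono) auto
    finally show ?thesis by simp
  qed
  have tp: "t^6 > 0" using t by simp
  have "gf 0 t = 1 - t^6/720 + gf 0 \<xi> / fact 12 * t^12" using eq s r by simp
  also have "\<dots> \<le> 1 - t^6/720 + 10 / fact 12 * t^12"
    using b by (intro add_left_mono mult_right_mono divide_right_mono) auto
  also have "\<dots> = 1 - t^6 * (1/720 - 10 / fact 12 * t^6)"
    by (simp add: algebra_simps power_add[symmetric])
  also have "\<dots> < 1"
  proof -
    have "10 / fact 12 * t^6 < 1/720" using t6 by (simp add: fact_numeral)
    then show ?thesis using tp by simp
  qed
  finally show ?thesis .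
qed

definition chh :: "real \<Rightarrow> real" where "chh K = cosh (sqrt 3 * K)"
definition DD :: "real \<Rightarrow> real" where "DD K = 1 + sin K ^ 2 - cos K * chh K"
definition FF :: "real \<Rightarrow> real" where "FF K = cos K - 2 / (chh K + cos K)"

lemma detG_DD: "detG k = 2/9 * sin (k/2) * (chh (k/2) - cos (k/2)) * DD (k/2)"
proof -
  have e: "sqrt 3 * (k/2) = sqrt 3/2*k" by simp
  have ch: "chh (k/2) = (exp (sqrt 3/2*k) + exp (-(sqrt 3/2*k)))/2"
    unfolding chh_def cosh_field_def e by (rule refl)
  show ?thesis unfolding detG_formula DD_def ch by (rule refl)
qed

lemma chh_ge1: "chh K \<ge> 1" unfolding chh_def by (rule cosh_real_ge_1)
lemma chh_gt1: "K \<noteq> 0 \<Longrightarrow> chh K > 1"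
proof -
  assume K: "K \<noteq> 0"
  then have "sqrt 3 * K \<noteq> 0" by simp
  then have "cosh (sqrt 3 * K) \<noteq> 1" using cosh_real_one_iff by blast
  then show ?thesis unfolding chh_def using cosh_real_ge_1[of "sqrt 3 * K"] by linarith
qed
lemma chh_cos_pos: "K \<noteq> 0 \<Longrightarrow> chh K + cos K > 0"
  using chh_gt1[of K] cos_ge_minus_one[of K] by linarith

lemma DD_FF: "K \<noteq> 0 \<Longrightarrow> DD K = - (chh K + cos K) * FF K"
proof -
  assume K: "K \<noteq> 0"
  have p: "chh K + cos K \<noteq> 0" using chh_cos_pos[OF K] by simp
  have "sin K ^ 2 = 1 - cos K ^ 2" by (simp add: sin_squared_eq)
  then have "DD K = 2 - cos K * (chh K + cos K)" unfolding DD_def by (simp add: power2_eq_square algebra_simps)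
  moreover have "- (chh K + cos K) * (cos K - 2 / (chh K + cos K)) = 2 - cos K * (chh K + cos K)"
    using p by (simp add: field_simps)
  ultimately show ?thesis unfolding FF_def by simp
qed

lemma DD_zero_iff: "K \<noteq> 0 \<Longrightarrow> DD K = 0 \<longleftrightarrow> FF K = 0"
  using DD_FF[of K] chh_cos_pos[of K] by auto

lemma DD_pos_cos: "cos K \<le> 0 \<Longrightarrow> DD K > 0"
proof -
  assume c: "cos K \<le> 0"
  have "cos K * chh K \<le> 0" using c chh_ge1[of K] by (simp add: mult_nonpos_nonneg)
  then show ?thesis unfolding DD_def by (smt (verit) zero_le_power2)
qed

lemma DD_small: "0 < K \<Longrightarrow> K \<le> pi/2 \<Longrightarrow> DD K > 0"
proof -
  assume K: "0 < K" "K \<le> pi/2"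
  have "gf 0 (2*K) < 1" using gf0_lt1[of "2*K"] K by simp
  moreover have "3 * gf 0 (2*K) = 3 - 2 * DD K"
  proof -
    have c2: "cos (2*K) = 1 - 2 * sin K ^ 2" by (rule cos_double_sin)
    have g: "gf 0 (2*K) = (cos (2*K) + (exp (sqrt 3 * K) + exp (-(sqrt 3 * K))) * cos K)/3"
      unfolding gf_def by (simp add: algebra_simps)
    have ch: "exp (sqrt 3 * K) + exp (-(sqrt 3 * K)) = 2 * chh K"
      unfolding chh_def cosh_field_def by simp
    show ?thesis unfolding g ch c2 DD_def by (simp add: field_simps)
  qed
  ultimately show ?thesis by simp
qed

lemma cos_shift: "cos (y + 2 * real j * pi) = cos y" and sin_shift: "sin (y + 2 * real j * pi) = sin y"
proof -
  have e: "2 * real j * pi = real (2*j) * pi" by simp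
  show "cos (y + 2 * real j * pi) = cos y" unfolding e cos_add by simp
  show "sin (y + 2 * real j * pi) = sin y" unfolding e sin_add by simp
qed

lemma cos_nonpos_shift:
  assumes "2 * real j * pi + pi/2 \<le> K" "K \<le> 2 * real j * pi + 3*pi/2"
  shows "cos K \<le> 0"
proof -
  define y where "y = K - 2 * real j * pi"
  have K: "K = y + 2 * real j * pi" unfolding y_def by simp
  have y: "pi/2 \<le> y" "y \<le> 3*pi/2" using assms unfolding y_def by auto
  have "cos y = - cos (y - pi)" by (simp add: cos_diff)
  moreover have "0 \<le> cos (y - pi)" using y by (intro cos_ge_zero) auto
  ultimately show ?thesis unfolding K cos_shift by simp
qed

lemma chh_gt4: "3/2*pi \<le> K \<Longrightarrow> chh K > 4"
proof -
  assume K: "3/2*pi \<le> K"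
  have "17/10 * (3/2*pi) \<le> sqrt 3 * K" using K sqrt3_bounds(1) by (intro mult_mono) auto
  moreover have "17/10 * (3/2*pi) > 7" using pi_gt3 by simp
  ultimately have x: "sqrt 3 * K > 7" by linarith
  have "exp (sqrt 3 * K) \<ge> 1 + sqrt 3 * K" by (rule exp_ge_add_one_self)
  moreover have "chh K \<ge> exp (sqrt 3 * K) / 2"
    unfolding chh_def cosh_field_def by (simp add: divide_right_mono)
  ultimately show ?thesis using x by linarith
qed

lemma FF_deriv:
  assumes K: "K \<noteq> 0"
  shows "(FF has_real_derivative (- sin K + 2 * (sqrt 3 * sinh (sqrt 3 * K) - sin K) / (chh K + cos K)^2)) (at K)"
proof -
  have p: "cosh (sqrt 3 * K) + cos K \<noteq> 0" using chh_cos_pos[OF K] unfolding chh_def by simp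
  show ?thesis unfolding FF_def chh_def
    apply (rule derivative_eq_intros refl | simp add: p)+
    using p by (simp add: minus_divide_left algebra_simps power2_eq_square)
qed

lemma FF_cont: "K \<noteq> 0 \<Longrightarrow> isCont FF K"
  using FF_deriv DERIV_isCont by blast

lemma FF_zero_pos: "K \<noteq> 0 \<Longrightarrow> cos K = 0 \<Longrightarrow> FF K < 0"
proof -
  assume K: "K \<noteq> 0" and c: "cos K = 0"
  have "chh K > 0" using chh_gt1[OF K] by simp
  then show ?thesis unfolding FF_def c by simp
qed

lemma sin_nonpos_A:
  assumes "2 * real j * pi - pi/2 \<le> K" "K \<le> 2 * real j * pi"
  shows "sin K \<le> 0"
proof -
  define y where "y = K - 2 * real j * pi"
  have K: "K = y + 2 * real j * pi" unfolding y_def by simp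
  have "0 \<le> sin (- y)" using assms unfolding y_def by (intro sin_ge_zero) auto
  then show ?thesis unfolding K sin_shift by simp
qed

lemma A_mono:
  assumes j: "1 \<le> j" and k1: "2 * real j * pi - pi/2 \<le> K1" and k12: "K1 < K2" and k2: "K2 \<le> 2 * real j * pi"
  shows "FF K1 < FF K2"
proof (rule DERIV_pos_imp_increasing[OF k12])
  fix x assume x: "K1 \<le> x" "x \<le> K2"
  have jp: "2 * pi \<le> 2 * real j * pi" using j by simp
  have xpos: "x > 0" using x k1 jp pi_gt_zero by linarith
  have s: "sin x \<le> 0" using sin_nonpos_A[of j x] x k1 k2 by linarith
  have sh: "sqrt 3 * sinh (sqrt 3 * x) > 0" using xpos by simp
  have den: "(chh x + cos x)^2 > 0" using chh_cos_pos[of x] xpos by simp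
  have "2 * (sqrt 3 * sinh (sqrt 3 * x) - sin x) / (chh x + cos x)^2 > 0"
  proof (rule divide_pos_pos)
    have aux: "\<And>a b::real. 0 < a \<Longrightarrow> b \<le> 0 \<Longrightarrow> 0 < 2*(a - b)" by simp
    show "0 < 2 * (sqrt 3 * sinh (sqrt 3 * x) - sin x)" by (rule aux[OF sh s])
  qed (rule den)
  then show "\<exists>y. (FF has_real_derivative y) (at x) \<and> 0 < y"
    using FF_deriv[of x] xpos s by (intro exI[of _ "- sin x + 2 * (sqrt 3 * sinh (sqrt 3 * x) - sin x) / (chh x + cos x)^2"]) auto
qed

lemma B_pos:
  assumes j: "1 \<le> j" and "2 * real j * pi \<le> K" "K \<le> 2 * real j * pi + pi/3"
  shows "FF K > 0"
proof -
  define y where "y = K - 2 * real j * pi"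
  have K: "K = y + 2 * real j * pi" unfolding y_def by simp
  have y: "0 \<le> y" "y \<le> pi/3" using assms unfolding y_def by auto
  have "cos (pi/3) \<le> cos y" using y by (intro cos_monotone_0_pi_le) auto
  then have c: "cos K \<ge> 1/2" unfolding K cos_shift cos_60 .
  have jp: "2 * pi \<le> 2 * real j * pi" using j by simp
  have ch: "chh K > 4" using chh_gt4[of K] assms jp by simp
  have "2 / (chh K + cos K) < 1/2"
    using ch c by (simp add: divide_less_eq)
  then show ?thesis unfolding FF_def using c by linarith
qed

lemma B_mono:
  assumes j: "1 \<le> j" and k1: "2 * real j * pi + pi/3 \<le> K1" and k12: "K1 < K2"
    and k2: "K2 \<le> 2 * real j * pi + pi/2"
  shows "FF K2 < FF K1"
proof (rule DERIV_neg_imp_decreasing[OF k12])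
  fix x assume x: "K1 \<le> x" "x \<le> K2"
  define y where "y = x - 2 * real j * pi"
  have X: "x = y + 2 * real j * pi" unfolding y_def by simp
  have y: "pi/3 \<le> y" "y \<le> pi/2" using x k1 k2 unfolding y_def by auto
  have "sin (pi/3) \<le> sin y" using y by (intro sin_monotone_2pi_le) auto
  then have s: "sin x \<ge> sqrt 3 / 2" unfolding X sin_shift sin_60 .
  have "0 \<le> cos y" using y by (intro cos_ge_zero) auto
  then have c: "cos x \<ge> 0" unfolding X cos_shift .
  have jp: "2 * pi \<le> 2 * real j * pi" using j by simp
  have xpos: "x > 0" using x k1 jp pi_gt_zero by linarith
  have "3/2*pi \<le> x" using x k1 jp pi_gt_zero by linarith
  then have ch: "chh x > 4" by (rule chh_gt4)
  have shc: "sinh (sqrt 3 * x) \<le> chh x" unfolding chh_def by (rule sinh_le_cosh_real)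
  define D where "D = (chh x + cos x)^2"
  have D1: "D \<ge> chh x * chh x" unfolding D_def power2_eq_square using c ch
    by (intro mult_mono) auto
  have chp: "chh x * chh x > 0" using ch by simp
  have Dp: "D > 0" using D1 chp by linarith
  have sp: "sin x > 0" by (rule less_le_trans[OF _ s]) simp
  have r3: "sqrt 3 / 2 * (chh x * chh x) > 2 * (sqrt 3 * chh x)"
  proof -
    have "chh x * chh x > 4 * chh x" using ch by simp
    then have "sqrt 3 / 2 * (chh x * chh x) > sqrt 3 / 2 * (4 * chh x)"
      by (intro mult_strict_left_mono) auto
    also have "sqrt 3 / 2 * (4 * chh x) = 2 * (sqrt 3 * chh x)" by simp
    finally show ?thesis .
  qed
  have "2 * (sqrt 3 * sinh (sqrt 3 * x) - sin x) < 2 * (sqrt 3 * sinh (sqrt 3 * x))" using sp by simp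
  also have "\<dots> \<le> 2 * (sqrt 3 * chh x)" using shc by simp
  also have "\<dots> < sqrt 3 / 2 * (chh x * chh x)" by (rule r3)
  also have "\<dots> \<le> sqrt 3 / 2 * D" using D1 by (intro mult_left_mono) auto
  also have "\<dots> \<le> sin x * D" using s Dp by (intro mult_right_mono) auto
  finally have "2 * (sqrt 3 * sinh (sqrt 3 * x) - sin x) < sin x * D" .
  then have lt: "2 * (sqrt 3 * sinh (sqrt 3 * x) - sin x) / D < sin x" using Dp by (simp add: divide_less_eq)
  show "\<exists>y. (FF has_real_derivative y) (at x) \<and> y < 0"
    using FF_deriv[of x] xpos lt unfolding D_def
    by (intro exI[of _ "- sin x + 2 * (sqrt 3 * sinh (sqrt 3 * x) - sin x) / (chh x + cos x)^2"]) auto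
qed

lemma cos_at_shift: "cos (2 * real j * pi - pi/2) = 0" "cos (2 * real j * pi + pi/2) = 0"
  "cos (2 * real j * pi) = 1" "sin (2 * real j * pi) = 0"
proof -
  have e1: "2 * real j * pi - pi/2 = -(pi/2) + 2 * real j * pi" by simp
  have e2: "2 * real j * pi + pi/2 = pi/2 + 2 * real j * pi" by simp
  have e3: "2 * real j * pi = 0 + 2 * real j * pi" by simp
  show "cos (2 * real j * pi - pi/2) = 0" unfolding e1 cos_shift by simp
  show "cos (2 * real j * pi + pi/2) = 0" unfolding e2 cos_shift by simp
  show "cos (2 * real j * pi) = 1" by (subst e3) (simp only: cos_shift cos_zero)
  show "sin (2 * real j * pi) = 0" by (subst e3) (simp only: sin_shift sin_zero)
qed

lemma rootA:
  assumes j: "1 \<le> j"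
  shows "\<exists>!K. 2 * real j * pi - pi < K \<and> K < 2 * real j * pi \<and> DD K = 0"
proof -
  define a where "a = 2 * real j * pi"
  have jp: "2*pi \<le> a" using j unfolding a_def by simp
  have nz: "K \<noteq> 0" if "a - pi/2 \<le> K" for K using that jp pi_gt_zero by linarith
  have f1: "FF (a - pi/2) < 0"
    using FF_zero_pos[OF nz] cos_at_shift(1)[of j] unfolding a_def by simp
  have f2: "FF a > 0"
  proof -
    have c: "cos a = 1" unfolding a_def by (rule cos_at_shift(3))
    have "chh a > 1" using chh_gt1[OF nz[of a]] by simp
    then have "2 / (chh a + 1) < 1" by (simp add: divide_less_eq)
    then show ?thesis unfolding FF_def c by simp
  qed
  obtain x where x: "a - pi/2 \<le> x" "x \<le> a" "FF x = 0"
    using IVT[of FF "a - pi/2" 0 a] f1 f2 FF_cont nz by force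
  have xa: "a - pi/2 < x" "x < a" using x f1 f2 by (auto simp: order_le_less)
  have Px: "a - pi < x \<and> x < a \<and> DD x = 0"
    using xa x DD_zero_iff[OF nz[of x]] by auto
  have big: "a - pi/2 < K" if K: "a - pi < K" "DD K = 0" for K
  proof (rule ccontr)
    assume "\<not> ?thesis"
    then have "K \<le> a - pi/2" by simp
    moreover have "2 * real (j - 1) * pi = a - 2*pi" using j unfolding a_def by (simp add: of_nat_diff algebra_simps)
    ultimately have "cos K \<le> 0" using cos_nonpos_shift[of "j - 1" K] K by (simp add: algebra_simps)
    then show False using DD_pos_cos K by fastforce
  qed
  show ?thesis unfolding a_def[symmetric]
  proof (rule ex1I[of _ x])
    show "a - pi < x \<and> x < a \<and> DD x = 0" by (rule Px)
  next
    fix K assume K: "a - pi < K \<and> K < a \<and> DD K = 0"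
    have kb: "a - pi/2 < K" using big K by auto
    have FK: "FF K = 0" using K DD_zero_iff[OF nz[of K]] kb by auto
    show "K = x"
    proof (rule linorder_cases[of K x])
      assume "K < x" then have "FF K < FF x" using A_mono[OF j, of K x] kb x(2) unfolding a_def by simp
      then show ?thesis using FK x by simp
    next
      assume "x < K" then have "FF x < FF K" using A_mono[OF j, of x K] xa K unfolding a_def by simp
      then show ?thesis using FK x by simp
    qed
  qed
qed

lemma rootB:
  assumes j: "1 \<le> j"
  shows "\<exists>!K. 2 * real j * pi < K \<and> K < 2 * real j * pi + pi \<and> DD K = 0"
proof -
  define a where "a = 2 * real j * pi"
  have jp: "2*pi \<le> a" using j unfolding a_def by simp
  have nz: "K \<noteq> 0" if "a \<le> K" for K using that jp pi_gt_zero by linarith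
  have f1: "FF (a + pi/3) > 0" using B_pos[OF j, of "a + pi/3"] unfolding a_def by simp
  have f2: "FF (a + pi/2) < 0"
    using FF_zero_pos[OF nz] cos_at_shift(2)[of j] unfolding a_def by simp
  obtain x where x: "a + pi/3 \<le> x" "x \<le> a + pi/2" "FF x = 0"
    using IVT2[of FF "a + pi/2" 0 "a + pi/3"] f1 f2 FF_cont nz by force
  have xa: "a + pi/3 < x" "x < a + pi/2" using x f1 f2 by (auto simp: order_le_less)
  have Px: "a < x \<and> x < a + pi \<and> DD x = 0"
    using xa x DD_zero_iff[OF nz[of x]] by auto
  have small: "K < a + pi/2" if K: "K < a + pi" "DD K = 0" for K
  proof (rule ccontr)
    assume "\<not> ?thesis"
    then have "a + pi/2 \<le> K" by simp
    then have "cos K \<le> 0" using cos_nonpos_shift[of j K] K unfolding a_def by simp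
    then show False using DD_pos_cos K by fastforce
  qed
  have big: "a + pi/3 < K" if K: "a < K" "K < a + pi/2" "DD K = 0" for K
  proof (rule ccontr)
    assume "\<not> ?thesis"
    then have "FF K > 0" using B_pos[OF j, of K] K unfolding a_def by simp
    moreover have "FF K = 0" using K DD_zero_iff[OF nz[of K]] by auto
    ultimately show False by simp
  qed
  show ?thesis unfolding a_def[symmetric]
  proof (rule ex1I[of _ x])
    show "a < x \<and> x < a + pi \<and> DD x = 0" by (rule Px)
  next
    fix K assume K: "a < K \<and> K < a + pi \<and> DD K = 0"
    have ks: "K < a + pi/2" using small K by auto
    have kb: "a + pi/3 < K" using big K ks by auto
    have FK: "FF K = 0" using K DD_zero_iff[OF nz[of K]] by auto
    show "K = x"
    proof (rule linorder_cases[of K x])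
      assume "K < x" then have "FF x < FF K" using B_mono[OF j, of K x] kb x(2) unfolding a_def by simp
      then show ?thesis using FK x by simp
    next
      assume "x < K" then have "FF K < FF x" using B_mono[OF j, of x K] xa ks unfolding a_def by simp
      then show ?thesis using FK x by simp
    qed
  qed
qed

lemma roots_classify:
  assumes K: "0 < K" and D: "DD K = 0"
  shows "\<exists>j\<ge>1. (2 * real j * pi - pi < K \<and> K < 2 * real j * pi) \<or> (2 * real j * pi < K \<and> K < 2 * real j * pi + pi)"
proof -
  have k1: "K > pi/2" using DD_small[OF K] D by (cases "K \<le> pi/2") auto
  have k2: "K > 3*pi/2"
  proof (rule ccontr)
    assume "\<not> ?thesis"
    then have "cos K \<le> 0" using cos_nonpos_shift[of 0 K] k1 by simp
    then show False using DD_pos_cos D by fastforce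
  qed
  define r where "r = (K + pi/2) / (2*pi)"
  define m where "m = floor r"
  have rm: "of_int m \<le> r" "r < of_int m + 1" unfolding m_def by linarith+
  have r1: "r > 1" unfolding r_def using k2 by (simp add: field_simps)
  then have m1: "m \<ge> 1" using rm by linarith
  define j where "j = nat m"
  have jm: "real j = of_int m" unfolding j_def using m1 by simp
  have j1: "j \<ge> 1" unfolding j_def using m1 by simp
  have lo: "2 * real j * pi - pi/2 \<le> K"
  proof -
    have "real j \<le> (K + pi/2) / (2*pi)" using rm jm unfolding r_def by simp
    then show ?thesis by (simp add: field_simps)
  qed
  have hi: "K < 2 * real j * pi + 3*pi/2"
  proof -
    have "(K + pi/2) / (2*pi) < real j + 1" using rm jm unfolding r_def by simp
    then show ?thesis by (simp add: field_simps)
  qed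
  have c: "cos K > 0"
  proof (rule ccontr)
    assume "\<not> ?thesis" then have "cos K \<le> 0" by simp
    then show False using DD_pos_cos D by fastforce
  qed
  have nA: "\<not> (2 * real j * pi + pi/2 \<le> K)"
  proof
    assume "2 * real j * pi + pi/2 \<le> K"
    then have "cos K \<le> 0" using cos_nonpos_shift[of j K] hi by simp
    then show False using c by simp
  qed
  have ne: "K \<noteq> 2 * real j * pi"
  proof
    assume e: "K = 2 * real j * pi"
    have "chh K > 1" using chh_gt1 K by simp
    then have "DD K < 0" unfolding DD_def e cos_at_shift by simp
    then show False using D by simp
  qed
  show ?thesis
  proof (rule exI[of _ j], intro conjI j1)
    show "(2 * real j * pi - pi < K \<and> K < 2 * real j * pi) \<or> (2 * real j * pi < K \<and> K < 2 * real j * pi + pi)"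
      using lo nA ne pi_gt_zero by (cases "K < 2 * real j * pi") auto
  qed
qed

lemma DD_odd: "odd n \<Longrightarrow> DD (real n * pi / 2) = 2"
proof -
  assume "odd n"
  then obtain i where n: "n = 2*i + 1" by (metis oddE)
  have e: "real n * pi / 2 = pi/2 + real i * pi" unfolding n by (simp add: algebra_simps)
  have c: "cos (real n * pi / 2) = 0" unfolding e cos_add by simp
  have "sin (real n * pi / 2) ^ 2 = 1" using c sin_squared_eq[of "real n * pi / 2"] by simp
  then show ?thesis unfolding DD_def c by simp
qed

lemma ex1_half:
  assumes "\<exists>!K. a < K \<and> K < b \<and> DD K = 0"
  shows "\<exists>!k. 2*a < k \<and> k < 2*b \<and> DD (k/2) = 0"
proof -
  obtain K where K: "a < K \<and> K < b \<and> DD K = 0" "\<And>K'. a < K' \<and> K' < b \<and> DD K' = 0 \<Longrightarrow> K' = K"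
    using assms by auto
  show ?thesis
  proof (rule ex1I[of _ "2*K"])
    show "2*a < 2*K \<and> 2*K < 2*b \<and> DD (2*K/2) = 0" using K(1) by simp
  next
    fix k assume "2*a < k \<and> k < 2*b \<and> DD (k/2) = 0"
    then have "a < k/2 \<and> k/2 < b \<and> DD (k/2) = 0" by simp
    then have "k/2 = K" using K(2) by blast
    then show "k = 2*K" by simp
  qed
qed

lemma kr_ex1:
  assumes n: "odd n" "3 \<le> n"
  shows "\<exists>!k. (real n - 1) * pi < k \<and> k < (real n + 1) * pi \<and> DD (k/2) = 0"
proof -
  obtain i where ni: "n = 2*i + 1" using n(1) by (metis oddE)
  have i1: "i \<ge> 1" using n(2) ni by simp
  show ?thesis
  proof (cases "odd i")
    case True
    then obtain l where il: "i = 2*l + 1" by (metis oddE)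
    define j where "j = l + 1"
    have j: "1 \<le> j" unfolding j_def by simp
    have e1: "2 * (2 * real j * pi - pi) = (real n - 1) * pi"
      unfolding j_def ni il by (simp add: algebra_simps)
    have e2: "2 * (2 * real j * pi) = (real n + 1) * pi"
      unfolding j_def ni il by (simp add: algebra_simps)
    show ?thesis using ex1_half[OF rootA[OF j]] unfolding e1 e2 .
  next
    case False
    then obtain j where ij: "i = 2*j" by (metis evenE)
    have j: "1 \<le> j" using i1 ij by simp
    have e1: "2 * (2 * real j * pi) = (real n - 1) * pi"
      unfolding ni ij by (simp add: algebra_simps)
    have e2: "2 * (2 * real j * pi + pi) = (real n + 1) * pi"
      unfolding ni ij by (simp add: algebra_simps)
    show ?thesis using ex1_half[OF rootB[OF j]] unfolding e1 e2 .
  qed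
qed

lemma root_in_some:
  assumes k: "0 < k" and D: "DD (k/2) = 0"
  shows "\<exists>n. odd n \<and> 3 \<le> n \<and> (real n - 1) * pi < k \<and> k < (real n + 1) * pi"
proof -
  obtain j where j: "j \<ge> 1" and c: "(2 * real j * pi - pi < k/2 \<and> k/2 < 2 * real j * pi) \<or>
      (2 * real j * pi < k/2 \<and> k/2 < 2 * real j * pi + pi)"
    using roots_classify[of "k/2"] k D by auto
  from c show ?thesis
  proof
    assume A: "2 * real j * pi - pi < k/2 \<and> k/2 < 2 * real j * pi"
    define n where "n = 4*j - 1"
    have rn: "real n = 4 * real j - 1" unfolding n_def using j by (simp add: of_nat_diff)
    have "odd n" unfolding n_def using j by (simp add: even_diff_nat)
    moreover have "3 \<le> n" unfolding n_def using j by simp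
    moreover have "(real n - 1) * pi < k \<and> k < (real n + 1) * pi"
      using A unfolding rn by (simp add: algebra_simps)
    ultimately show ?thesis by blast
  next
    assume B: "2 * real j * pi < k/2 \<and> k/2 < 2 * real j * pi + pi"
    define n where "n = 4*j + 1"
    have rn: "real n = 4 * real j + 1" unfolding n_def by simp
    have "odd n" unfolding n_def by simp
    moreover have "3 \<le> n" unfolding n_def using j by simp
    moreover have "(real n - 1) * pi < k \<and> k < (real n + 1) * pi"
      using B unfolding rn by (simp add: algebra_simps)
    ultimately show ?thesis by blast
  qed
qed

definition kr :: "nat \<Rightarrow> real" where
  "kr n = (THE k. (real n - 1) * pi < k \<and> k < (real n + 1) * pi \<and> DD (k/2) = 0)"

lemma kr: "odd n \<Longrightarrow> 3 \<le> n \<Longrightarrow> (real n - 1) * pi < kr n \<and> kr n < (real n + 1) * pi \<and> DD (kr n/2) = 0"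
  unfolding kr_def by (rule theI'[OF kr_ex1])

lemma kr_unique: "odd n \<Longrightarrow> 3 \<le> n \<Longrightarrow> (real n - 1) * pi < k \<Longrightarrow> k < (real n + 1) * pi \<Longrightarrow> DD (k/2) = 0
   \<Longrightarrow> k = kr n"
  unfolding kr_def by (rule the1_equality[OF kr_ex1, symmetric]) auto

lemma kr_pos: "odd n \<Longrightarrow> 3 \<le> n \<Longrightarrow> kr n > 0"
proof -
  assume n: "odd n" "3 \<le> n"
  have "(real n - 1) * pi \<ge> 0" using n by simp
  then show ?thesis using kr[OF n] by linarith
qed

lemma kr_ne: "odd n \<Longrightarrow> 3 \<le> n \<Longrightarrow> kr n \<noteq> real n * pi"
proof
  assume n: "odd n" "3 \<le> n" and e: "kr n = real n * pi"
  have "DD (kr n / 2) = 0" using kr[OF n] by simp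
  moreover have "DD (kr n / 2) = 2" unfolding e using DD_odd[OF n(1)] by simp
  ultimately show False by simp
qed

definition lamf :: "nat \<Rightarrow> real" where
  "lamf n = (if even n then (real n * pi)^6 else (kr n)^6)"
definition delf :: "nat \<Rightarrow> real" where
  "delf n = kr n - real n * pi"

lemma eigen_lam:
  assumes n: "2 \<le> n"
  shows "sixth_order_eigenvalue (lamf n)"
proof -
  define k where "k = (if even n then real n * pi else kr n)"
  have kp: "k > 0"
  proof (cases "even n")
    case True then show ?thesis unfolding k_def using n by simp
  next
    case False
    then have "3 \<le> n" using n by presburger
    then show ?thesis unfolding k_def using False kr_pos[of n] by simp
  qed
  have lk: "lamf n = k^6" unfolding lamf_def k_def by simp
  have rk: "root 6 (lamf n) = k" unfolding lk using kp by (simp add: real_root_power_cancel)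
  have "detG k = 0"
  proof (cases "even n")
    case True
    then obtain m where m: "n = 2*m" by (metis evenE)
    have "sin (k/2) = 0" unfolding k_def using True m by simp
    then show ?thesis unfolding detG_DD by simp
  next
    case False
    then have "3 \<le> n" using n by presburger
    then have "DD (k/2) = 0" unfolding k_def using False kr[of n] by simp
    then show ?thesis unfolding detG_DD by simp
  qed
  then show ?thesis unfolding eig_iff rk using kp lk by simp
qed

lemma eigen_in:
  assumes ev: "sixth_order_eigenvalue mu"
  shows "\<exists>n\<ge>2. mu = lamf n"
proof -
  have mu: "mu > 0" and d: "detG (root 6 mu) = 0" using ev unfolding eig_iff by auto
  define k where "k = root 6 mu"
  have k: "k > 0" "k^6 = mu" unfolding k_def using mu by simp_all
  have k2: "k/2 \<noteq> 0" using k by simp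
  have ch: "chh (k/2) - cos (k/2) > 0" using chh_gt1[OF k2] cos_le_one[of "k/2"] by linarith
  have "sin (k/2) = 0 \<or> DD (k/2) = 0" using d ch unfolding k_def[symmetric] detG_DD by simp
  then show ?thesis
  proof
    assume "sin (k/2) = 0"
    then obtain i :: int where i: "k/2 = of_int i * pi" using sin_zero_iff_int2 by blast
    have "of_int i * pi > 0" using i k(1) by (simp add: mult.commute)
    then have "real_of_int i > 0" using pi_gt_zero by (simp add: zero_less_mult_iff)
    then have ip: "i > 0" by simp
    define n where "n = 2 * nat i"
    have rn: "real n = 2 * of_int i" unfolding n_def using ip by simp
    have kn: "k = real n * pi" using i rn by simp
    have "even n" "2 \<le> n" unfolding n_def using ip by auto
    then show ?thesis unfolding lamf_def using k(2) kn by auto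
  next
    assume D: "DD (k/2) = 0"
    obtain n where n: "odd n" "3 \<le> n" "(real n - 1) * pi < k" "k < (real n + 1) * pi"
      using root_in_some[OF k(1) D] by blast
    have "k = kr n" using kr_unique[OF n(1,2,3,4) D] .
    then show ?thesis unfolding lamf_def using n k(2) by (intro exI[of _ n]) auto
  qed
qed

lemma lam_mono: "2 \<le> n \<Longrightarrow> lamf n < lamf (Suc n)"
proof (cases "even n")
  case True
  assume n: "2 \<le> n"
  have o: "odd (Suc n)" "3 \<le> Suc n" using True n by auto
  have "real n * pi < kr (Suc n)" using kr[OF o] by simp
  moreover have "0 \<le> real n * pi" by simp
  ultimately have "(real n * pi)^6 < (kr (Suc n))^6" by (intro power_strict_mono) auto
  then show ?thesis unfolding lamf_def using True by simp
next
  case False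
  assume n: "2 \<le> n"
  have o: "odd n" "3 \<le> n" using False n by presburger+
  have "kr n < real (Suc n) * pi" using kr[OF o] by (simp add: algebra_simps)
  moreover have "0 \<le> kr n" using kr_pos[OF o] by simp
  ultimately have "(kr n)^6 < (real (Suc n) * pi)^6" by (intro power_strict_mono) auto
  then show ?thesis unfolding lamf_def using False by simp
qed

lemma DD_alt: "DD K = 2 - cos K * (chh K + cos K)"
proof -
  have "sin K ^ 2 = 1 - cos K ^ 2" by (simp add: sin_squared_eq)
  then show ?thesis unfolding DD_def by (simp add: power2_eq_square algebra_simps)
qed

lemma sinc_lim: "((\<lambda>h. sin h / h) \<longlongrightarrow> 1) (at (0::real))"
proof -
  have "DERIV sin 0 :> cos 0" by (rule DERIV_sin)
  then have "((\<lambda>h. (sin (0 + h) - sin 0) / h) \<longlongrightarrow> 1) (at (0::real))"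
    unfolding DERIV_def by simp
  then show ?thesis by simp
qed

lemma asym_facts:
  fixes i :: nat
  defines "n \<equiv> 2 * i + 3"
  defines "K \<equiv> kr n / 2"
  defines "d \<equiv> K - real n * pi / 2"
  defines "E \<equiv> exp (- (pi * sqrt 3 / 2) * real n)"
  shows "delf n / (8 * (-1) ^ (nat \<lfloor>real n / 2\<rfloor> + 1) * E)
          = (d / sin d) / (exp (sqrt 3 * d) + E^2 * exp (- (sqrt 3 * d)) + 2 * E * cos K)"
    and "- (pi/2) < d" "d < pi/2" "d \<noteq> 0"
    and "\<bar>sin d\<bar> \<le> 2 * inverse (real (Suc i))"
    and "E \<le> inverse (real (Suc i))"
proof -
  have on: "odd n" "3 \<le> n" unfolding n_def by auto
  note kn = kr[OF on]
  show dl: "- (pi/2) < d" and du: "d < pi/2" unfolding d_def K_def using kn by (simp_all add: field_simps)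
  show dn: "d \<noteq> 0" unfolding d_def K_def using kr_ne[OF on] by simp
  define s where "s = ((-1)::real) ^ i"
  have s2: "s * s = 1" unfolding s_def by (simp add: power_mult_distrib[symmetric])
  have fl: "nat \<lfloor>real n / 2\<rfloor> + 1 = i + 2"
  proof -
    have "\<lfloor>real n / 2\<rfloor> = int i + 1" unfolding n_def by (simp add: floor_eq_iff)
    then show ?thesis by simp
  qed
  have sg: "((-1)::real) ^ (nat \<lfloor>real n / 2\<rfloor> + 1) = s" unfolding fl s_def by simp
  have Kd: "K = (d + pi/2) + real (i+1) * pi" unfolding d_def n_def by (simp add: algebra_simps)
  have cK: "cos K = s * sin d"
  proof -
    have c1: "cos (real (i+1) * pi) = (-1)^(i+1)" by (rule cos_npi)
    have s1: "sin (real (i+1) * pi) = 0" by (rule sin_npi)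
    have "cos K = (-1)^(i+1) * cos (d + pi/2)" unfolding Kd cos_add[of "d + pi/2"] c1 s1 by simp
    also have "cos (d + pi/2) = - sin d" by (simp add: cos_add)
    finally show ?thesis unfolding s_def by simp
  qed
  have K0: "K \<noteq> 0" unfolding K_def using kr_pos[OF on] by simp
  define X where "X = chh K + cos K"
  have Xp: "X > 0" unfolding X_def using chh_cos_pos[OF K0] .
  have DX: "cos K * X = 2" using kn DD_alt[of K] unfolding X_def K_def by simp
  have sd: "sin d = 2 * s / X"
  proof -
    have h: "s * sin d * X = 2" using DX cK by simp
    have "sin d * X = (s * s) * (sin d * X)" using s2 by simp
    also have "\<dots> = s * (s * sin d * X)" by (simp add: algebra_simps)
    also have "\<dots> = 2 * s" using h by simp
    finally have "sin d * X = 2 * s" .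
    then show ?thesis using Xp by (simp add: field_simps)
  qed
  have sdn: "sin d \<noteq> 0" using sd Xp s2 by auto
  have Ep: "E > 0" unfolding E_def by simp
  have sqK: "sqrt 3 * K = (pi * sqrt 3 / 2) * real n + sqrt 3 * d" unfolding d_def by (simp add: algebra_simps)
  have e1: "E * exp (sqrt 3 * K) = exp (sqrt 3 * d)"
    unfolding E_def sqK exp_add[symmetric] by simp
  have e2: "E * exp (- (sqrt 3 * K)) = E^2 * exp (- (sqrt 3 * d))"
    unfolding E_def sqK power2_eq_square exp_add[symmetric] by (simp add: algebra_simps)
  have den: "2 * E * X = exp (sqrt 3 * d) + E^2 * exp (- (sqrt 3 * d)) + 2 * E * cos K"
  proof -
    have "2 * E * chh K = E * exp (sqrt 3 * K) + E * exp (- (sqrt 3 * K))"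
      unfolding chh_def cosh_field_def by (simp add: algebra_simps)
    then show ?thesis unfolding X_def e1 e2 by (simp add: algebra_simps)
  qed
  have dl2: "delf n = 2 * d" unfolding delf_def d_def K_def by simp
  show "delf n / (8 * (-1) ^ (nat \<lfloor>real n / 2\<rfloor> + 1) * E)
          = (d / sin d) / (exp (sqrt 3 * d) + E^2 * exp (- (sqrt 3 * d)) + 2 * E * cos K)"
  proof -
    have "delf n / (8 * (-1) ^ (nat \<lfloor>real n / 2\<rfloor> + 1) * E) = 2 * d / (8 * s * E)" unfolding sg dl2 ..
    also have "\<dots> = (d / sin d) / (2 * E * X)"
      unfolding sd using Xp Ep s2 by (auto simp: field_simps)
    finally show ?thesis unfolding den .
  qed
  define a where "a = sqrt 3 * K"
  have chlow: "2 * chh K \<ge> 1 + a"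
  proof -
    have h1: "2 * chh K \<ge> exp a" unfolding chh_def cosh_field_def a_def by simp
    have h2: "exp a \<ge> 1 + a" by (rule exp_ge_add_one_self)
    show ?thesis using h1 h2 by linarith
  qed
  have Kl: "K \<ge> 3 * real (Suc i)"
  proof -
    have "K > (real n - 1) * pi / 2" unfolding K_def using kn by simp
    moreover have "(real n - 1) * pi / 2 = real (Suc i) * pi" unfolding n_def by (simp add: algebra_simps)
    moreover have "real (Suc i) * pi \<ge> real (Suc i) * 3" using pi_gt3 by (intro mult_left_mono) auto
    ultimately show ?thesis by linarith
  qed
  have sK: "a \<ge> K"
  proof -
    have "sqrt 3 \<ge> 1" by simp
    moreover have "K \<ge> 0" using Kl by simp
    ultimately have "1 * K \<le> sqrt 3 * K" by (intro mult_right_mono) auto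
    then show ?thesis unfolding a_def by simp
  qed
  have s1: "real (Suc i) \<ge> 1" by simp
  have Xl: "X \<ge> real (Suc i)" unfolding X_def using chlow sK Kl cos_ge_minus_one[of K] s1 by (smt (verit))
  show "\<bar>sin d\<bar> \<le> 2 * inverse (real (Suc i))"
  proof -
    have as: "\<bar>s\<bar> = 1" unfolding s_def by (simp add: power_abs)
    have "\<bar>sin d\<bar> = 2 / X" unfolding sd using Xp as by (simp add: abs_mult)
    also have "\<dots> \<le> 2 / real (Suc i)" using Xl by (intro divide_left_mono) auto
    finally show ?thesis by (simp add: field_simps)
  qed
  show "E \<le> inverse (real (Suc i))"
  proof -
    have c1: "pi * sqrt 3 / 2 \<ge> 1"
    proof -
      have "pi * sqrt 3 \<ge> 3 * 1" using pi_gt3 by (intro mult_mono) auto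
      then show ?thesis by simp
    qed
    have "(pi * sqrt 3 / 2) * real n \<ge> real (Suc i)"
    proof -
      have "(pi * sqrt 3 / 2) * real n \<ge> 1 * real n" using c1 by (intro mult_right_mono) auto
      then show ?thesis unfolding n_def by simp
    qed
    then have "exp ((pi * sqrt 3 / 2) * real n) \<ge> real (Suc i)"
      using exp_ge_add_one_self[of "(pi * sqrt 3 / 2) * real n"] by linarith
    then have "inverse (exp ((pi * sqrt 3 / 2) * real n)) \<le> inverse (real (Suc i))"
      by (intro le_imp_inverse_le) auto
    then show ?thesis unfolding E_def by (simp add: exp_minus)
  qed
qed

lemma asym:
  "(\<lambda>k. delf (2 * k + 3) /
        (8 * (-1) ^ (nat \<lfloor>real (2 * k + 3) / 2\<rfloor> + 1) *
         exp (- (pi * sqrt 3 / 2) * real (2 * k + 3)))) \<longlonglongrightarrow> 1"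
proof -
  define d where "d i = kr (2*i+3) / 2 - real (2*i+3) * pi / 2" for i
  define E where "E i = exp (- (pi * sqrt 3 / 2) * real (2*i+3))" for i
  define Kf where "Kf i = kr (2*i+3) / 2" for i
  have eq: "delf (2 * i + 3) / (8 * (-1) ^ (nat \<lfloor>real (2 * i + 3) / 2\<rfloor> + 1) *
         exp (- (pi * sqrt 3 / 2) * real (2 * i + 3)))
      = (d i / sin (d i)) / (exp (sqrt 3 * d i) + E i ^ 2 * exp (- (sqrt 3 * d i)) + 2 * E i * cos (Kf i))"
    for i using asym_facts(1)[of i] unfolding d_def E_def Kf_def by simp
  have dl: "- (pi/2) < d i" "d i < pi/2" "d i \<noteq> 0" for i
    using asym_facts(2-4)[of i] unfolding d_def by simp_all
  have sb: "\<bar>sin (d i)\<bar> \<le> 2 * inverse (real (Suc i))" for i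
    using asym_facts(5)[of i] unfolding d_def by simp
  have Eb: "E i \<le> inverse (real (Suc i))" for i
    using asym_facts(6)[of i] unfolding E_def by simp
  have Ep: "E i > 0" for i unfolding E_def by simp
  note inv0 = LIMSEQ_inverse_real_of_nat
  have E0: "E \<longlonglongrightarrow> 0"
    by (rule Lim_null_comparison[OF _ inv0]) (use Eb Ep in \<open>auto simp: less_imp_le\<close>)
  have inv2: "(\<lambda>i. 2 * inverse (real (Suc i))) \<longlonglongrightarrow> 0"
    using tendsto_mult_right_zero[OF inv0, of 2] by simp
  have s0: "(\<lambda>i. sin (d i)) \<longlonglongrightarrow> 0"
    by (rule Lim_null_comparison[OF _ inv2]) (use sb in auto)
  have "(\<lambda>i. arcsin (sin (d i))) \<longlonglongrightarrow> arcsin 0"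
    by (rule isCont_tendsto_compose[OF isCont_arcsin s0]) auto
  moreover have "arcsin (sin (d i)) = d i" for i using dl[of i] by (intro arcsin_sin) auto
  ultimately have d0: "d \<longlonglongrightarrow> 0" by simp
  have fl: "filterlim d (at 0) sequentially"
    using d0 dl(3) by (simp add: filterlim_at)
  have sc: "(\<lambda>i. sin (d i) / d i) \<longlonglongrightarrow> 1"
    using filterlim_compose[OF sinc_lim fl] .
  have q1: "(\<lambda>i. d i / sin (d i)) \<longlonglongrightarrow> 1"
    using tendsto_inverse[OF sc] by simp
  have c1: "(\<lambda>i. exp (sqrt 3 * d i)) \<longlonglongrightarrow> 1"
    using tendsto_exp[OF tendsto_mult[OF tendsto_const d0, of "sqrt 3"]] by simp
  have c2: "(\<lambda>i. E i ^ 2 * exp (- (sqrt 3 * d i))) \<longlonglongrightarrow> 0"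
    using tendsto_mult[OF tendsto_power[OF E0, of 2] tendsto_exp[OF tendsto_minus[OF tendsto_mult[OF tendsto_const d0, of "sqrt 3"]]]]
    by simp
  have E2: "(\<lambda>i. 2 * E i) \<longlonglongrightarrow> 0" using tendsto_mult_right_zero[OF E0, of 2] by simp
  have c3: "(\<lambda>i. 2 * E i * cos (Kf i)) \<longlonglongrightarrow> 0"
  proof (rule Lim_null_comparison[OF _ E2])
    show "\<forall>\<^sub>F i in sequentially. norm (2 * E i * cos (Kf i)) \<le> 2 * E i"
    proof (intro always_eventually allI)
      fix i
      have "\<bar>cos (Kf i)\<bar> \<le> 1" by simp
      then have "2 * E i * \<bar>cos (Kf i)\<bar> \<le> 2 * E i * 1" using Ep[of i] by (intro mult_left_mono) auto
      then show "norm (2 * E i * cos (Kf i)) \<le> 2 * E i" using Ep[of i] by (simp add: abs_mult)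
    qed
  qed
  have den: "(\<lambda>i. exp (sqrt 3 * d i) + E i ^ 2 * exp (- (sqrt 3 * d i)) + 2 * E i * cos (Kf i)) \<longlonglongrightarrow> 1 + 0 + 0"
    by (intro tendsto_add c1 c2 c3)
  have "(\<lambda>i. (d i / sin (d i)) / (exp (sqrt 3 * d i) + E i ^ 2 * exp (- (sqrt 3 * d i)) + 2 * E i * cos (Kf i)))
      \<longlonglongrightarrow> 1 / (1 + 0 + 0)"
    by (rule tendsto_divide[OF q1 den]) simp
  then show ?thesis unfolding eq by simp
qed

theorem theorem1p1:
  shows "\<exists>(lam :: nat \<Rightarrow> real) (\<delta> :: nat \<Rightarrow> real).
     (\<forall>n\<ge>2. lam n < lam (Suc n)) \<and>
     {\<mu>. sixth_order_eigenvalue \<mu>} = lam ` {2..} \<and>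
     (\<forall>n\<ge>2. even n \<longrightarrow> lam n = (real n * pi) ^ 6) \<and>
     (\<forall>n\<ge>3. odd n \<longrightarrow> lam n = (real n * pi + \<delta> n) ^ 6 \<and> \<delta> n \<noteq> 0) \<and>
     ((\<lambda>k. \<delta> (2 * k + 3) /
        (8 * (-1) ^ (nat \<lfloor>real (2 * k + 3) / 2\<rfloor> + 1) *
         exp (- (pi * sqrt 3 / 2) * real (2 * k + 3)))) \<longlonglongrightarrow> 1) \<and>
     (\<forall>n\<ge>2. root 6 (lam n) = real n * pi \<longleftrightarrow> even n)"
proof (rule exI[of _ lamf], rule exI[of _ delf], intro conjI)
  show "\<forall>n\<ge>2. lamf n < lamf (Suc n)" using lam_mono by auto
  show "{\<mu>. sixth_order_eigenvalue \<mu>} = lamf ` {2..}"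
  proof
    show "{\<mu>. sixth_order_eigenvalue \<mu>} \<subseteq> lamf ` {2..}" using eigen_in by fastforce
    show "lamf ` {2..} \<subseteq> {\<mu>. sixth_order_eigenvalue \<mu>}" using eigen_lam by auto
  qed
  show "\<forall>n\<ge>2. even n \<longrightarrow> lamf n = (real n * pi) ^ 6" by (simp add: lamf_def)
  show "\<forall>n\<ge>3. odd n \<longrightarrow> lamf n = (real n * pi + delf n) ^ 6 \<and> delf n \<noteq> 0"
    using kr_ne by (auto simp: lamf_def delf_def)
  show "(\<lambda>k. delf (2 * k + 3) /
        (8 * (-1) ^ (nat \<lfloor>real (2 * k + 3) / 2\<rfloor> + 1) *
         exp (- (pi * sqrt 3 / 2) * real (2 * k + 3)))) \<longlonglongrightarrow> 1" by (rule asym)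
  show "\<forall>n\<ge>2. root 6 (lamf n) = real n * pi \<longleftrightarrow> even n"
  proof (intro allI impI)
    fix n :: nat assume n: "2 \<le> n"
    show "root 6 (lamf n) = real n * pi \<longleftrightarrow> even n"
    proof (cases "even n")
      case True
      then show ?thesis unfolding lamf_def by (simp add: real_root_power_cancel)
    next
      case False
      then have o: "odd n" "3 \<le> n" using n by presburger+
      have "root 6 (lamf n) = kr n" unfolding lamf_def using False kr_pos[OF o]
        by (simp add: real_root_power_cancel)
      then show ?thesis using kr_ne[OF o] False by simp
    qed
  qed
qed

end
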